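(* Let $G$ be a compact Abelian group with unit $e$ and continuous length function $l$; let $(H_n)_{n\in\mathbb{N}}$ be closed subgroups converging to $G$ in the Hausdorff distance of $d_l(g,g')=l(g^{-1}g')$; let $H_\infty=G$, $\lambda_n$ the Haar probability measure on $H_n$, $J_n$ the annihilator of $H_n$ in $\widehat G$, $q_n:\widehat G\to\widehat{H_n}=\widehat G/J_n$; let $\sigma_n$ be skew bicharacters of $\widehat{H_n}$ ($n\in\mathbb{N}\cup\{\infty\}$) with lifts to $\widehat G$ converging pointwise to $\sigma_\infty$; let $\|\cdot\|_n$ be the norm of $C^*(\widehat{H_n},\sigma_n)$ and $L_n(a)=\sup\{l(g)^{-1}\|a-\alpha^g_{H_n}(a)\|_n:g\in H_n\setminus\{e\}\}$. Let $\varepsilon>0$ and let $\varphi_\varepsilon$ be a finite linear combination of characters of $G$ with $\varphi_\varepsilon\ge0$, $\int_G\varphi_\varepsilon\,d\lambda_\infty=1$ and $\int_G\varphi_\varepsilon l\,d\lambda_\infty\le\varepsilon/(3(1+\varepsilon))$. Let $B\subseteq\widehat G$ be the (finite) set of characters with nonzero coefficient in $\varphi_\varepsilon$, let $V_\varepsilon=\{f\in C_c(\widehat G):\operatorname{supp}f\subseteq B,\ f=f^*\text{ in }C^*(\widehat G,\sigma_\infty)\}$, let $N_\varepsilon\in\mathbb{N}$ be such that for all $n\ge N_\varepsilon$, $q_n$ is injective on $B$ and $\int_{H_n}\varphi_\varepsilon d\lambda_n\ge(1+\varepsilon)^{-1}$, and for $n\ge N_\varepsilon$ let $\theta_n:V_\varepsilon\to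 C^*(\widehat{H_n},\sigma_n)$ be $\theta_n(f)(q_n(h))=\sum_{j\in J_n}f(hj)$, with $\theta_\infty=\mathrm{Id}$. Then for every $a\in V_\varepsilon$, $\lim_{n\to\infty}L_n(\theta_n(a))=L_\infty(a)$.
   Context: Length function: $l\ge0$, $l(g)=0$ iff $g=e$, symmetric, subadditive. Skew bicharacter: bicharacter $\sigma$ of a discrete Abelian group with $\sigma(\chi,\chi)=1$. $C^*(\Gamma,\sigma)$: twisted group C*-algebra (completion of $C_c(\Gamma)$ under twisted convolution $(f*g)(\chi)=\sum_{\chi'}f(\chi')g(\chi'^{-1}\chi)\sigma(\chi',\chi'^{-1}\chi)$, involution $f^*(\chi)=\sigma(\chi,\chi^{-1})\overline{f(\chi^{-1})}$). $\alpha_{H_n}$ is the dual action $\alpha^g_{H_n}(f)=\langle g,\cdot\rangle f$. *)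

theory Defs
  imports "HOL-Analysis.Analysis"
begin

text \<open>The compact Abelian group G is modelled as a whole type 'g of class
topological_ab_group_add (written additively: unit 0, g^{-1}g' = -g + g').\<close>

definition length_fun :: "('g::group_add \<Rightarrow> real) \<Rightarrow> bool" where
  "length_fun l \<longleftrightarrow> (\<forall>g. l g \<ge> 0) \<and> (\<forall>g. l g = 0 \<longleftrightarrow> g = 0)
     \<and> (\<forall>g. l (- g) = l g) \<and> (\<forall>g h. l (g + h) \<le> l g + l h)"

definition is_subgroup :: "'g::group_add set \<Rightarrow> bool" where
  "is_subgroup H \<longleftrightarrow> 0 \<in> H \<and> (\<forall>x\<in>H. \<forall>y\<in>H. x + y \<in> H) \<and> (\<forall>x\<in>H. - x \<in> H)"

definition hausdorff_dist :: "('a \<Rightarrow> 'a \<Rightarrow> real) \<Rightarrow> 'a set \<Rightarrow> 'a set \<Rightarrow> ereal" where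
  "hausdorff_dist d A B = max (SUP a\<in>A. INF b\<in>B. ereal (d a b)) (SUP b\<in>B. INF a\<in>A. ereal (d a b))"

definition haar_prob :: "'g::{topological_group_add} set \<Rightarrow> 'g measure \<Rightarrow> bool" where
  "haar_prob H M \<longleftrightarrow> sets M = sets (borel :: 'g measure) \<and> emeasure M UNIV = 1
     \<and> emeasure M (- H) = 0
     \<and> (\<forall>h\<in>H. \<forall>A\<in>sets (borel :: 'g measure). emeasure M ((\<lambda>x. h + x) ` A) = emeasure M A)"

definition characters :: "('g::{topological_space, group_add} \<Rightarrow> complex) set" where
  "characters = {\<gamma>. continuous_on UNIV \<gamma> \<and> (\<forall>x. cmod (\<gamma> x) = 1)
                     \<and> (\<forall>x y. \<gamma> (x + y) = \<gamma> x * \<gamma> y)}"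

definition annihilator :: "'g::{topological_space, group_add} set \<Rightarrow> ('g \<Rightarrow> complex) set" where
  "annihilator H = {\<gamma> \<in> characters. \<forall>h\<in>H. \<gamma> h = 1}"

text \<open>The quotient map q : \<open>\<widehat>G\<close> \<rightarrow> \<open>\<widehat>G\<close>/J, realised as restriction of characters to H
  (two characters have the same restriction iff they differ by an element of J).\<close>
definition q :: "'g set \<Rightarrow> ('g \<Rightarrow> complex) \<Rightarrow> ('g \<Rightarrow> complex)" where
  "q H \<gamma> = restrict \<gamma> H"

definition dual_sub :: "'g::{topological_space, group_add} set \<Rightarrow> ('g \<Rightarrow> complex) set" where
  "dual_sub H = q H ` characters"

definition dmul :: "'g set \<Rightarrow> ('g \<Rightarrow> complex) \<Rightarrow> ('g \<Rightarrow> complex) \<Rightarrow> ('g \<Rightarrow> complex)" where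
  "dmul H a b = restrict (\<lambda>x. a x * b x) H"

definition dinv :: "'g set \<Rightarrow> ('g \<Rightarrow> complex) \<Rightarrow> ('g \<Rightarrow> complex)" where
  "dinv H a = restrict (\<lambda>x. cnj (a x)) H"

text \<open>Generic discrete Abelian group (\<Gamma>, mul, ginv): skew bicharacters,
  twisted convolution, involution, and the C*-norm of C*(\<Gamma>,\<sigma>) on C_c(\<Gamma>)
  (computed in the left regular \<sigma>-representation on \<ell>^2(\<Gamma>)).\<close>

definition skew_bichar :: "'c set \<Rightarrow> ('c \<Rightarrow> 'c \<Rightarrow> 'c) \<Rightarrow> ('c \<Rightarrow> 'c \<Rightarrow> complex) \<Rightarrow> bool" where
  "skew_bichar \<Gamma> mul \<sigma> \<longleftrightarrow>
     (\<forall>a\<in>\<Gamma>. \<forall>b\<in>\<Gamma>. cmod (\<sigma> a b) = 1)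
   \<and> (\<forall>a\<in>\<Gamma>. \<forall>b\<in>\<Gamma>. \<forall>c\<in>\<Gamma>. \<sigma> (mul a b) c = \<sigma> a c * \<sigma> b c \<and> \<sigma> a (mul b c) = \<sigma> a b * \<sigma> a c)
   \<and> (\<forall>a\<in>\<Gamma>. \<sigma> a a = 1)"

definition tw_conv :: "'c set \<Rightarrow> ('c \<Rightarrow> 'c \<Rightarrow> 'c) \<Rightarrow> ('c \<Rightarrow> 'c) \<Rightarrow> ('c \<Rightarrow> 'c \<Rightarrow> complex)
     \<Rightarrow> ('c \<Rightarrow> complex) \<Rightarrow> ('c \<Rightarrow> complex) \<Rightarrow> ('c \<Rightarrow> complex)" where
  "tw_conv \<Gamma> mul ginv \<sigma> f g = (\<lambda>\<gamma>. \<Sum>\<gamma>'\<in>{\<gamma>'\<in>\<Gamma>. f \<gamma>' \<noteq> 0}.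
       f \<gamma>' * g (mul (ginv \<gamma>') \<gamma>) * \<sigma> \<gamma>' (mul (ginv \<gamma>') \<gamma>))"

definition tw_star :: "('c \<Rightarrow> 'c) \<Rightarrow> ('c \<Rightarrow> 'c \<Rightarrow> complex) \<Rightarrow> ('c \<Rightarrow> complex) \<Rightarrow> ('c \<Rightarrow> complex)" where
  "tw_star ginv \<sigma> f = (\<lambda>\<gamma>. \<sigma> \<gamma> (ginv \<gamma>) * cnj (f (ginv \<gamma>)))"

definition l2norm :: "'c set \<Rightarrow> ('c \<Rightarrow> complex) \<Rightarrow> real" where
  "l2norm \<Gamma> \<xi> = sqrt (\<Sum>\<gamma>\<in>{\<gamma>\<in>\<Gamma>. \<xi> \<gamma> \<noteq> 0}. (cmod (\<xi> \<gamma>))\<^sup>2)"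

definition cstar_norm :: "'c set \<Rightarrow> ('c \<Rightarrow> 'c \<Rightarrow> 'c) \<Rightarrow> ('c \<Rightarrow> 'c) \<Rightarrow> ('c \<Rightarrow> 'c \<Rightarrow> complex)
     \<Rightarrow> ('c \<Rightarrow> complex) \<Rightarrow> real" where
  "cstar_norm \<Gamma> mul ginv \<sigma> f = Sup {l2norm \<Gamma> (tw_conv \<Gamma> mul ginv \<sigma> f \<xi>) | \<xi>.
       finite {\<gamma>\<in>\<Gamma>. \<xi> \<gamma> \<noteq> 0} \<and> l2norm \<Gamma> \<xi> \<le> 1}"

definition normH :: "'g::{topological_space, group_add} set \<Rightarrow> (('g \<Rightarrow> complex) \<Rightarrow> ('g \<Rightarrow> complex) \<Rightarrow> complex)
     \<Rightarrow> (('g \<Rightarrow> complex) \<Rightarrow> complex) \<Rightarrow> real" where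
  "normH H \<sigma> f = cstar_norm (dual_sub H) (dmul H) (dinv H) \<sigma> f"

definition dual_action :: "'g \<Rightarrow> (('g \<Rightarrow> complex) \<Rightarrow> complex) \<Rightarrow> (('g \<Rightarrow> complex) \<Rightarrow> complex)" where
  "dual_action g f = (\<lambda>\<psi>. \<psi> g * f \<psi>)"

definition LipL :: "('g::{topological_space, group_add} \<Rightarrow> real) \<Rightarrow> 'g set
     \<Rightarrow> (('g \<Rightarrow> complex) \<Rightarrow> ('g \<Rightarrow> complex) \<Rightarrow> complex) \<Rightarrow> (('g \<Rightarrow> complex) \<Rightarrow> complex) \<Rightarrow> ereal" where
  "LipL l H \<sigma> a = (SUP g\<in>H - {0}. ereal (normH H \<sigma> (\<lambda>\<psi>. a \<psi> - dual_action g a \<psi>) / l g))"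

definition theta :: "'g::{topological_space, group_add} set \<Rightarrow> (('g \<Rightarrow> complex) \<Rightarrow> complex)
     \<Rightarrow> (('g \<Rightarrow> complex) \<Rightarrow> complex)" where
  "theta H f = (\<lambda>\<psi>. let h = (SOME h. h \<in> characters \<and> q H h = \<psi>) in
      \<Sum>j\<in>{j\<in>annihilator H. f (\<lambda>x. h x * j x) \<noteq> 0}. f (\<lambda>x. h x * j x))"

definition V_eps :: "('g::{topological_space, group_add} \<Rightarrow> complex) set
     \<Rightarrow> (('g \<Rightarrow> complex) \<Rightarrow> ('g \<Rightarrow> complex) \<Rightarrow> complex) \<Rightarrow> (('g \<Rightarrow> complex) \<Rightarrow> complex) set" where
  "V_eps B \<sigma> = {f. (\<forall>\<gamma>. f \<gamma> \<noteq> 0 \<longrightarrow> \<gamma> \<in> B)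
      \<and> (\<forall>\<gamma>\<in>dual_sub UNIV. f \<gamma> = tw_star (dinv UNIV) \<sigma> f \<gamma>)}"

end

theory Submission
  imports Defs
begin

definition spt :: "'a set \<Rightarrow> ('a \<Rightarrow> 'b::zero) \<Rightarrow> 'a set" where
  "spt A v = {x\<in>A. v x \<noteq> 0}"

definition gs :: "'a set \<Rightarrow> ('a \<Rightarrow> real) \<Rightarrow> real" where
  "gs A g = (\<Sum>x\<in>spt A g. g x)"

lemma gs_eq:
  assumes "finite S" "spt A g \<subseteq> S" "S \<subseteq> A"
  shows "gs A g = (\<Sum>x\<in>S. g x)"
  unfolding gs_def
  by (rule sum.mono_neutral_left) (use assms in \<open>auto simp: spt_def\<close>)

lemma gs_eq':
  assumes "finite S" "\<And>x. x \<in> A \<Longrightarrow> x \<notin> S \<Longrightarrow> g x = 0" "S \<subseteq> A"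
  shows "gs A g = (\<Sum>x\<in>S. g x)"
  using assms by (intro gs_eq) (auto simp: spt_def)

lemma l2norm_gs: "l2norm A v = sqrt (gs A (\<lambda>x. (cmod (v x))\<^sup>2))"
  unfolding l2norm_def gs_def spt_def by simp

lemma l2norm_eq:
  assumes "finite S" "spt A v \<subseteq> S" "S \<subseteq> A"
  shows "l2norm A v = L2_set (\<lambda>x. cmod (v x)) S"
proof -
  have "gs A (\<lambda>x. (cmod (v x))\<^sup>2) = (\<Sum>x\<in>S. (cmod (v x))\<^sup>2)"
    by (rule gs_eq) (use assms in \<open>auto simp: spt_def\<close>)
  then show ?thesis unfolding l2norm_gs L2_set_def by simp
qed

lemma spt_finite_subset: "finite B \<Longrightarrow> (\<And>x. x \<in> A \<Longrightarrow> v x \<noteq> 0 \<Longrightarrow> x \<in> B) \<Longrightarrow> finite (spt A v)"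
  by (rule finite_subset[of _ B]) (auto simp: spt_def)

lemma l2norm_cong: "(\<And>x. x \<in> A \<Longrightarrow> u x = v x) \<Longrightarrow> l2norm A u = l2norm A v"
  unfolding l2norm_def by (rule arg_cong[where f=sqrt], rule sum.cong) auto

lemma gs_cong: "(\<And>x. x \<in> A \<Longrightarrow> u x = v x) \<Longrightarrow> gs A u = gs A v"
  unfolding gs_def spt_def by (rule sum.cong) auto

lemma l2norm_nonneg: "l2norm A v \<ge> 0"
  unfolding l2norm_def by (auto intro!: sum_nonneg)

lemma l2_triangle:
  assumes "finite (spt A u)" "finite (spt A v)"
  shows "l2norm A (\<lambda>x. u x + v x) \<le> l2norm A u + l2norm A v"
proof -
  let ?S = "spt A u \<union> spt A v"
  have S: "finite ?S" "?S \<subseteq> A" using assms by (auto simp: spt_def)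
  have "l2norm A (\<lambda>x. u x + v x) = L2_set (\<lambda>x. cmod (u x + v x)) ?S"
    by (rule l2norm_eq) (use S in \<open>auto simp: spt_def\<close>)
  also have "\<dots> \<le> L2_set (\<lambda>x. cmod (u x) + cmod (v x)) ?S"
    by (rule L2_set_mono) (auto intro: norm_triangle_ineq)
  also have "\<dots> \<le> L2_set (\<lambda>x. cmod (u x)) ?S + L2_set (\<lambda>x. cmod (v x)) ?S"
    by (rule L2_set_triangle_ineq)
  also have "L2_set (\<lambda>x. cmod (u x)) ?S = l2norm A u"
    by (rule l2norm_eq[symmetric]) (use S in auto)
  also have "L2_set (\<lambda>x. cmod (v x)) ?S = l2norm A v"
    by (rule l2norm_eq[symmetric]) (use S in auto)
  finally show ?thesis .
qed

lemma spt_add: "finite (spt A (u::_\<Rightarrow>_::monoid_add)) \<Longrightarrow> finite (spt A v) \<Longrightarrow> finite (spt A (\<lambda>x. u x + v x))"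
  by (rule finite_subset[of _ "spt A u \<union> spt A v"]) (auto simp: spt_def)

lemma spt_sum: "finite I \<Longrightarrow> (\<And>i. i \<in> I \<Longrightarrow> finite (spt A (u i :: _ \<Rightarrow> _::comm_monoid_add))) \<Longrightarrow> finite (spt A (\<lambda>x. \<Sum>i\<in>I. u i x))"
proof (induction I rule: finite_induct)
  case empty then show ?case by (simp add: spt_def)
next
  case (insert i I)
  then show ?case by (simp add: spt_add)
qed

lemma l2_sum_triangle:
  "finite I \<Longrightarrow> (\<And>i. i \<in> I \<Longrightarrow> finite (spt A (u i))) \<Longrightarrow>
     l2norm A (\<lambda>x. \<Sum>i\<in>I. u i x) \<le> (\<Sum>i\<in>I. l2norm A (u i))"
proof (induction I rule: finite_induct)
  case empty then show ?case by (simp add: l2norm_def)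
next
  case (insert i I)
  have "l2norm A (\<lambda>x. \<Sum>j\<in>insert i I. u j x) = l2norm A (\<lambda>x. u i x + (\<Sum>j\<in>I. u j x))"
    using insert by simp
  also have "\<dots> \<le> l2norm A (u i) + l2norm A (\<lambda>x. \<Sum>j\<in>I. u j x)"
    by (rule l2_triangle) (use insert in \<open>auto intro: spt_sum\<close>)
  also have "\<dots> \<le> l2norm A (u i) + (\<Sum>j\<in>I. l2norm A (u j))"
    using insert by auto
  finally show ?case using insert by simp
qed

lemma l2_mono:
  assumes "finite (spt A v)" "\<And>x. x \<in> A \<Longrightarrow> cmod (u x) \<le> cmod (v x)"
  shows "l2norm A u \<le> l2norm A v"
proof -
  have sub: "spt A u \<subseteq> spt A v" using assms(2) by (force simp: spt_def)
  have "l2norm A u = L2_set (\<lambda>x. cmod (u x)) (spt A v)"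
    by (rule l2norm_eq) (use assms sub in \<open>auto simp: spt_def\<close>)
  also have "\<dots> \<le> L2_set (\<lambda>x. cmod (v x)) (spt A v)"
    by (rule L2_set_mono) (use assms in \<open>auto simp: spt_def\<close>)
  also have "\<dots> = l2norm A v"
    by (rule l2norm_eq[symmetric]) (use assms in \<open>auto simp: spt_def\<close>)
  finally show ?thesis .
qed

lemma l2_cmult: "l2norm A (\<lambda>x. c * v x) = cmod c * l2norm A v"
proof (cases "c = 0")
  case True then show ?thesis by (simp add: l2norm_def spt_def)
next
  case False
  have "{x\<in>A. c * v x \<noteq> 0} = {x\<in>A. v x \<noteq> 0}" using False by auto
  then show ?thesis using False
    by (simp add: l2norm_def norm_mult power_mult_distrib real_sqrt_mult sum_distrib_left[symmetric])
qed

lemma l2_ge_L2set: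
  assumes "finite (spt A v)" "finite S" "S \<subseteq> A"
  shows "L2_set (\<lambda>x. cmod (v x)) S \<le> l2norm A v"
proof -
  have "L2_set (\<lambda>x. cmod (v x)) S \<le> L2_set (\<lambda>x. cmod (v x)) (S \<union> spt A v)"
    unfolding L2_set_def using assms
    by (intro real_sqrt_le_mono sum_mono2) auto
  also have "\<dots> = l2norm A v"
    by (rule l2norm_eq[symmetric]) (use assms in \<open>auto simp: spt_def\<close>)
  finally show ?thesis .
qed

lemma spt_comp_fin:
  assumes "finite (spt A v)" "\<And>x. x \<in> A \<Longrightarrow> cmod (u x) \<le> cmod (v x)"
  shows "finite (spt A u)"
  by (rule finite_subset[OF _ assms(1)]) (use assms(2) in \<open>force simp: spt_def\<close>)

lemma gs_prod:
  assumes fin: "finite (spt (A \<times> C) g)"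
  shows "gs (A \<times> C) g = gs C (\<lambda>c. gs A (\<lambda>a. g (a, c)))"
    and "gs (A \<times> C) g = gs A (\<lambda>a. gs C (\<lambda>c. g (a, c)))"
proof -
  define S1 where "S1 = fst ` spt (A \<times> C) g"
  define S2 where "S2 = snd ` spt (A \<times> C) g"
  have f: "finite S1" "finite S2" using fin by (auto simp: S1_def S2_def)
  have s: "S1 \<subseteq> A" "S2 \<subseteq> C" by (auto simp: S1_def S2_def spt_def)
  have z: "g (a, c) = 0" if "a \<in> A" "c \<in> C" "a \<notin> S1 \<or> c \<notin> S2" for a c
    using that by (force simp: S1_def S2_def spt_def image_iff)
  have tot: "gs (A \<times> C) g = (\<Sum>p\<in>S1 \<times> S2. g p)"
    by (rule gs_eq') (use f s z in auto)
  have in1: "gs A (\<lambda>a. g (a, c)) = (\<Sum>a\<in>S1. g (a, c))" if "c \<in> C" for c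
    by (rule gs_eq') (use f s z that in auto)
  have in2: "gs C (\<lambda>c. g (a, c)) = (\<Sum>c\<in>S2. g (a, c))" if "a \<in> A" for a
    by (rule gs_eq') (use f s z that in auto)
  have "gs C (\<lambda>c. gs A (\<lambda>a. g (a, c))) = (\<Sum>c\<in>S2. gs A (\<lambda>a. g (a, c)))"
    by (rule gs_eq') (use f s z in \<open>auto simp: gs_def spt_def\<close>)
  also have "\<dots> = (\<Sum>c\<in>S2. \<Sum>a\<in>S1. g (a, c))" using in1 s by (auto intro: sum.cong)
  also have "\<dots> = (\<Sum>p\<in>S1 \<times> S2. g p)"
    by (subst sum.swap) (simp add: sum.cartesian_product)
  finally show "gs (A \<times> C) g = gs C (\<lambda>c. gs A (\<lambda>a. g (a, c)))" using tot by simp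
  have "gs A (\<lambda>a. gs C (\<lambda>c. g (a, c))) = (\<Sum>a\<in>S1. gs C (\<lambda>c. g (a, c)))"
    by (rule gs_eq') (use f s z in \<open>auto simp: gs_def spt_def\<close>)
  also have "\<dots> = (\<Sum>a\<in>S1. \<Sum>c\<in>S2. g (a, c))" using in2 s by (auto intro: sum.cong)
  also have "\<dots> = (\<Sum>p\<in>S1 \<times> S2. g p)"
    by (simp add: sum.cartesian_product)
  finally show "gs (A \<times> C) g = gs A (\<lambda>a. gs C (\<lambda>c. g (a, c)))" using tot by simp
qed

lemma gs_nonneg: "(\<And>x. x \<in> A \<Longrightarrow> g x \<ge> 0) \<Longrightarrow> gs A g \<ge> 0"
  unfolding gs_def spt_def by (auto intro: sum_nonneg)

lemma gs_add: "finite (spt A f) \<Longrightarrow> finite (spt A g) \<Longrightarrow> gs A (\<lambda>x. f x + g x) = gs A f + gs A g"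
proof -
  assume a: "finite (spt A f)" "finite (spt A g)"
  let ?S = "spt A f \<union> spt A g"
  have "gs A (\<lambda>x. f x + g x) = (\<Sum>x\<in>?S. f x + g x)" by (rule gs_eq') (use a in \<open>auto simp: spt_def\<close>)
  moreover have "gs A f = (\<Sum>x\<in>?S. f x)" by (rule gs_eq') (use a in \<open>auto simp: spt_def\<close>)
  moreover have "gs A g = (\<Sum>x\<in>?S. g x)" by (rule gs_eq') (use a in \<open>auto simp: spt_def\<close>)
  ultimately show ?thesis by (simp add: sum.distrib)
qed

lemma gs_cmult: "gs A (\<lambda>x. c * f x) = c * gs A f"
  by (cases "c = 0") (auto simp: gs_def spt_def sum_distrib_left)

lemma gs_sum: "finite I \<Longrightarrow> (\<And>i. i \<in> I \<Longrightarrow> finite (spt A (u i))) \<Longrightarrow> gs A (\<lambda>x. \<Sum>i\<in>I. u i x) = (\<Sum>i\<in>I. gs A (u i))"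
proof (induction I rule: finite_induct)
  case empty then show ?case by (simp add: gs_def spt_def)
next
  case (insert i I)
  then show ?case by (simp add: gs_add spt_sum)
qed

lemma gs_mono: "finite (spt A g) \<Longrightarrow> (\<And>x. x \<in> A \<Longrightarrow> 0 \<le> f x) \<Longrightarrow> (\<And>x. x \<in> A \<Longrightarrow> f x \<le> g x) \<Longrightarrow> gs A f \<le> gs A g"
proof -
  assume a: "finite (spt A g)" "\<And>x. x \<in> A \<Longrightarrow> 0 \<le> f x" "\<And>x. x \<in> A \<Longrightarrow> f x \<le> g x"
  have sub: "spt A f \<subseteq> spt A g" using a by (force simp: spt_def)
  have "gs A f = (\<Sum>x\<in>spt A g. f x)" by (rule gs_eq) (use a sub in \<open>auto simp: spt_def\<close>)
  also have "\<dots> \<le> (\<Sum>x\<in>spt A g. g x)" using a by (auto intro: sum_mono simp: spt_def)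
  finally show ?thesis by (simp add: gs_def)
qed

lemma gs_spt_sq: "spt A (\<lambda>x. (cmod (v x))\<^sup>2) = spt A v"
  by (auto simp: spt_def)


definition l1n :: "'a set \<Rightarrow> ('a \<Rightarrow> complex) \<Rightarrow> real" where
  "l1n A f = (\<Sum>x\<in>spt A f. cmod (f x))"

locale abgrp =
  fixes \<Gamma> :: "'c set" and mul :: "'c \<Rightarrow> 'c \<Rightarrow> 'c" and ginv :: "'c \<Rightarrow> 'c" and e :: 'c
  assumes mul_cl[simp]: "x \<in> \<Gamma> \<Longrightarrow> y \<in> \<Gamma> \<Longrightarrow> mul x y \<in> \<Gamma>"
  and inv_cl[simp]: "x \<in> \<Gamma> \<Longrightarrow> ginv x \<in> \<Gamma>"
  and e_cl[simp]: "e \<in> \<Gamma>"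
  and assoc: "x \<in> \<Gamma> \<Longrightarrow> y \<in> \<Gamma> \<Longrightarrow> z \<in> \<Gamma> \<Longrightarrow> mul (mul x y) z = mul x (mul y z)"
  and comm: "x \<in> \<Gamma> \<Longrightarrow> y \<in> \<Gamma> \<Longrightarrow> mul x y = mul y x"
  and lunit[simp]: "x \<in> \<Gamma> \<Longrightarrow> mul e x = x"
  and linv[simp]: "x \<in> \<Gamma> \<Longrightarrow> mul (ginv x) x = e"
begin

lemma runit[simp]: "x \<in> \<Gamma> \<Longrightarrow> mul x e = x" using comm[of x e] by simp
lemma rinv[simp]: "x \<in> \<Gamma> \<Longrightarrow> mul x (ginv x) = e" using comm[of x "ginv x"] by simp
lemma cancel1[simp]: "x \<in> \<Gamma> \<Longrightarrow> y \<in> \<Gamma> \<Longrightarrow> mul (ginv x) (mul x y) = y"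
  by (simp add: assoc[symmetric])
lemma cancel2[simp]: "x \<in> \<Gamma> \<Longrightarrow> y \<in> \<Gamma> \<Longrightarrow> mul x (mul (ginv x) y) = y"
  by (simp add: assoc[symmetric])
lemma lcomm: "x \<in> \<Gamma> \<Longrightarrow> y \<in> \<Gamma> \<Longrightarrow> z \<in> \<Gamma> \<Longrightarrow> mul x (mul y z) = mul y (mul x z)"
  by (simp add: assoc[symmetric] comm[of x y])
lemma lcancel: "a \<in> \<Gamma> \<Longrightarrow> x \<in> \<Gamma> \<Longrightarrow> y \<in> \<Gamma> \<Longrightarrow> mul a x = mul a y \<Longrightarrow> x = y"
proof -
  assume a: "a \<in> \<Gamma>" "x \<in> \<Gamma>" "y \<in> \<Gamma>" "mul a x = mul a y"
  have "x = mul (ginv a) (mul a x)" using a(1,2) by simp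
  also have "\<dots> = mul (ginv a) (mul a y)" using a(4) by simp
  also have "\<dots> = y" using a by simp
  finally show ?thesis .
qed
lemma inv_unique: "a \<in> \<Gamma> \<Longrightarrow> x \<in> \<Gamma> \<Longrightarrow> mul a x = e \<Longrightarrow> x = ginv a"
proof -
  assume a: "a \<in> \<Gamma>" "x \<in> \<Gamma>" "mul a x = e"
  have "x = mul (ginv a) (mul a x)" using a(1,2) by simp
  also have "\<dots> = mul (ginv a) e" using a(3) by simp
  also have "\<dots> = ginv a" using a by simp
  finally show ?thesis .
qed
lemma ginv_ginv[simp]: "x \<in> \<Gamma> \<Longrightarrow> ginv (ginv x) = x"
  using inv_unique[of "ginv x" x] by simp
lemma ginv_mul: "x \<in> \<Gamma> \<Longrightarrow> y \<in> \<Gamma> \<Longrightarrow> ginv (mul x y) = mul (ginv x) (ginv y)"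
proof -
  assume a: "x \<in> \<Gamma>" "y \<in> \<Gamma>"
  have "mul (mul x y) (mul (ginv x) (ginv y)) = e"
    using a by (simp add: assoc lcomm[of y "ginv x"])
  then show ?thesis using a inv_unique[of "mul x y" "mul (ginv x) (ginv y)"] by simp
qed
lemma ginv_e[simp]: "ginv e = e" using inv_unique[of e e] by simp
lemma mul_eq_iff: "a \<in> \<Gamma> \<Longrightarrow> x \<in> \<Gamma> \<Longrightarrow> y \<in> \<Gamma> \<Longrightarrow> mul (ginv a) x = y \<longleftrightarrow> x = mul a y"
  by (auto)

lemma div_e: "a \<in> \<Gamma> \<Longrightarrow> x \<in> \<Gamma> \<Longrightarrow> mul (ginv a) x = e \<longleftrightarrow> a = x"
  by (metis cancel2 runit linv)

lemma div_e2: "a \<in> \<Gamma> \<Longrightarrow> x \<in> \<Gamma> \<Longrightarrow> e = mul (ginv a) x \<longleftrightarrow> a = x"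
  using div_e by metis

lemma gs_transl:
  assumes a: "a \<in> \<Gamma>"
  shows "gs \<Gamma> (\<lambda>x. g (mul a x)) = gs \<Gamma> g"
proof -
  have "bij_betw (mul a) (spt \<Gamma> (\<lambda>x. g (mul a x))) (spt \<Gamma> g)"
    by (rule bij_betw_byWitness[where f'="mul (ginv a)"]) (use a in \<open>auto simp: spt_def image_iff intro!: bexI[where x="mul (ginv a) _"]\<close>)
  then show ?thesis unfolding gs_def by (rule sum.reindex_bij_betw)
qed

lemma l2_transl: "a \<in> \<Gamma> \<Longrightarrow> l2norm \<Gamma> (\<lambda>x. v (mul a x)) = l2norm \<Gamma> v"
  unfolding l2norm_gs by (subst gs_transl[where g="\<lambda>x. (cmod (v x))\<^sup>2"]) auto

lemma spt_transl: "a \<in> \<Gamma> \<Longrightarrow> finite (spt \<Gamma> v) \<Longrightarrow> finite (spt \<Gamma> (\<lambda>x. v (mul a x)))"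
proof -
  assume a: "a \<in> \<Gamma>" "finite (spt \<Gamma> v)"
  have "spt \<Gamma> (\<lambda>x. v (mul a x)) \<subseteq> mul (ginv a) ` spt \<Gamma> v"
  proof
    fix x assume x: "x \<in> spt \<Gamma> (\<lambda>x. v (mul a x))"
    then have "x = mul (ginv a) (mul a x)" "mul a x \<in> spt \<Gamma> v" using a by (auto simp: spt_def)
    then show "x \<in> mul (ginv a) ` spt \<Gamma> v" by blast
  qed
  then show ?thesis using a finite_subset by blast
qed

end

lemma idem_one: "(x::complex) = x * x \<Longrightarrow> x \<noteq> 0 \<Longrightarrow> x = 1"
  using mult_cancel_left1[of x x] by blast

lemma inv_eq2: "(y::complex) * s = 1 \<Longrightarrow> z * s = 1 \<Longrightarrow> y = z"
proof -
  assume h: "y * s = 1" "z * s = 1"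
  have "y = y * (z * s)" using h(2) by simp
  also have "\<dots> = z * (y * s)" by (simp add: ac_simps)
  also have "\<dots> = z" using h(1) by simp
  finally show ?thesis .
qed

locale abgrp_sig = abgrp +
  fixes \<sigma> :: "'c \<Rightarrow> 'c \<Rightarrow> complex"
  assumes sb: "skew_bichar \<Gamma> mul \<sigma>"
begin

lemma sig_norm[simp]: "a \<in> \<Gamma> \<Longrightarrow> b \<in> \<Gamma> \<Longrightarrow> cmod (\<sigma> a b) = 1"
  using sb by (auto simp: skew_bichar_def)
lemma sig_ml: "a \<in> \<Gamma> \<Longrightarrow> b \<in> \<Gamma> \<Longrightarrow> c \<in> \<Gamma> \<Longrightarrow> \<sigma> (mul a b) c = \<sigma> a c * \<sigma> b c"
  using sb by (auto simp: skew_bichar_def)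
lemma sig_mr: "a \<in> \<Gamma> \<Longrightarrow> b \<in> \<Gamma> \<Longrightarrow> c \<in> \<Gamma> \<Longrightarrow> \<sigma> a (mul b c) = \<sigma> a b * \<sigma> a c"
  using sb by (auto simp: skew_bichar_def)
lemma sig_diag[simp]: "a \<in> \<Gamma> \<Longrightarrow> \<sigma> a a = 1"
  using sb by (auto simp: skew_bichar_def)
lemma sig_nz: assumes "a \<in> \<Gamma>" "b \<in> \<Gamma>" shows "\<sigma> a b \<noteq> 0"
proof
  assume "\<sigma> a b = 0"
  moreover have "cmod (\<sigma> a b) = 1" using assms by simp
  ultimately show False by simp
qed
lemma sig_e_r[simp]: "a \<in> \<Gamma> \<Longrightarrow> \<sigma> a e = 1"
proof -
  assume a: "a \<in> \<Gamma>"
  have "\<sigma> a e = \<sigma> a (mul e e)" by simp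
  also have "\<dots> = \<sigma> a e * \<sigma> a e" by (rule sig_mr) (simp_all add: a)
  finally have "\<sigma> a e = \<sigma> a e * \<sigma> a e" .
  moreover have "\<sigma> a e \<noteq> 0" using a by (intro sig_nz) simp_all
  ultimately show ?thesis by (rule idem_one)
qed
lemma sig_e_l[simp]: "a \<in> \<Gamma> \<Longrightarrow> \<sigma> e a = 1"
proof -
  assume a: "a \<in> \<Gamma>"
  have "\<sigma> e a = \<sigma> (mul e e) a" by simp
  also have "\<dots> = \<sigma> e a * \<sigma> e a" by (rule sig_ml) (simp_all add: a)
  finally have "\<sigma> e a = \<sigma> e a * \<sigma> e a" .
  moreover have "\<sigma> e a \<noteq> 0" using a by (intro sig_nz) simp_all
  ultimately show ?thesis by (rule idem_one)
qed
lemma sig_skew: "a \<in> \<Gamma> \<Longrightarrow> b \<in> \<Gamma> \<Longrightarrow> \<sigma> a b * \<sigma> b a = 1"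
proof -
  assume a: "a \<in> \<Gamma>" "b \<in> \<Gamma>"
  have "1 = \<sigma> (mul a b) (mul a b)" using a by simp
  also have "\<dots> = \<sigma> a a * \<sigma> b a * (\<sigma> a b * \<sigma> b b)"
    using a by (simp only: sig_ml sig_mr mul_cl)
  also have "\<dots> = \<sigma> a b * \<sigma> b a" using a by (simp add: ac_simps)
  finally show ?thesis by simp
qed
lemma sig_ginv_r: "a \<in> \<Gamma> \<Longrightarrow> b \<in> \<Gamma> \<Longrightarrow> \<sigma> a (ginv b) = \<sigma> b a"
proof -
  assume a: "a \<in> \<Gamma>" "b \<in> \<Gamma>"
  have "\<sigma> a (ginv b) * \<sigma> a b = \<sigma> a (mul (ginv b) b)" using a by (simp only: sig_mr inv_cl)
  then have 1: "\<sigma> a (ginv b) * \<sigma> a b = 1" using a by simp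
  have 2: "\<sigma> b a * \<sigma> a b = 1" using sig_skew[of a b] a by (simp add: mult.commute)
  show ?thesis using inv_eq2[OF 1 2] .
qed
lemma sig_ginv_l: "a \<in> \<Gamma> \<Longrightarrow> b \<in> \<Gamma> \<Longrightarrow> \<sigma> (ginv a) b = \<sigma> b a"
proof -
  assume a: "a \<in> \<Gamma>" "b \<in> \<Gamma>"
  have "\<sigma> (ginv a) b * \<sigma> a b = \<sigma> (mul (ginv a) a) b" using a by (simp only: sig_ml inv_cl)
  then have 1: "\<sigma> (ginv a) b * \<sigma> a b = 1" using a by simp
  have 2: "\<sigma> b a * \<sigma> a b = 1" using sig_skew[of a b] a by (simp add: mult.commute)
  show ?thesis using inv_eq2[OF 1 2] .
qed
lemma sig_shift: "b \<in> \<Gamma> \<Longrightarrow> x \<in> \<Gamma> \<Longrightarrow> \<sigma> b (mul (ginv b) x) = \<sigma> b x"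
  by (simp add: sig_mr sig_ginv_r)

abbreviation "conv \<equiv> tw_conv \<Gamma> mul ginv \<sigma>"
abbreviation "Nm \<equiv> cstar_norm \<Gamma> mul ginv \<sigma>"

lemma conv_alt:
  assumes "finite S" "spt \<Gamma> f \<subseteq> S" "S \<subseteq> \<Gamma>"
  shows "conv f \<xi> \<gamma> = (\<Sum>b\<in>S. f b * \<xi> (mul (ginv b) \<gamma>) * \<sigma> b (mul (ginv b) \<gamma>))"
  unfolding tw_conv_def
  by (rule sum.mono_neutral_left) (use assms in \<open>auto simp: spt_def\<close>)

lemma conv_cong: "(\<And>x. x \<in> \<Gamma> \<Longrightarrow> f x = f' x) \<Longrightarrow> conv f = conv f'"
proof -
  assume a: "\<And>x. x \<in> \<Gamma> \<Longrightarrow> f x = f' x"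
  have s: "{\<gamma>' \<in> \<Gamma>. f \<gamma>' \<noteq> 0} = {\<gamma>' \<in> \<Gamma>. f' \<gamma>' \<noteq> 0}" using a by auto
  show ?thesis unfolding tw_conv_def s by (rule ext, rule ext, rule sum.cong) (use a in auto)
qed

lemma Nm_cong: "(\<And>x. x \<in> \<Gamma> \<Longrightarrow> f x = f' x) \<Longrightarrow> Nm f = Nm f'"
  unfolding cstar_norm_def using conv_cong by metis

lemma conv_spt:
  assumes "finite (spt \<Gamma> f)" "finite (spt \<Gamma> \<xi>)"
  shows "finite (spt \<Gamma> (conv f \<xi>))"
proof -
  have "spt \<Gamma> (conv f \<xi>) \<subseteq> (\<lambda>(b, s). mul b s) ` (spt \<Gamma> f \<times> spt \<Gamma> \<xi>)"
  proof
    fix \<gamma> assume g: "\<gamma> \<in> spt \<Gamma> (conv f \<xi>)"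
    then have "(\<Sum>b\<in>spt \<Gamma> f. f b * \<xi> (mul (ginv b) \<gamma>) * \<sigma> b (mul (ginv b) \<gamma>)) \<noteq> 0"
      using conv_alt[OF assms(1) order_refl] by (auto simp: spt_def)
    then obtain b where b: "b \<in> spt \<Gamma> f" "\<xi> (mul (ginv b) \<gamma>) \<noteq> 0"
      by (metis (no_types, lifting) mult_eq_0_iff sum.neutral)
    have "\<gamma> \<in> \<Gamma>" using g by (auto simp: spt_def)
    moreover have "b \<in> \<Gamma>" using b by (auto simp: spt_def)
    ultimately have eq: "\<gamma> = (\<lambda>(b, s). mul b s) (b, mul (ginv b) \<gamma>)" by simp
    have "(b, mul (ginv b) \<gamma>) \<in> spt \<Gamma> f \<times> spt \<Gamma> \<xi>"
      using b \<open>\<gamma> \<in> \<Gamma>\<close> by (auto simp: spt_def)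
    then show "\<gamma> \<in> (\<lambda>(b, s). mul b s) ` (spt \<Gamma> f \<times> spt \<Gamma> \<xi>)"
      using eq by (rule rev_image_eqI)
  qed
  then show ?thesis using assms finite_subset by blast
qed

lemma conv_bound:
  assumes f: "finite (spt \<Gamma> f)" and x: "finite (spt \<Gamma> \<xi>)"
  shows "l2norm \<Gamma> (conv f \<xi>) \<le> l1n \<Gamma> f * l2norm \<Gamma> \<xi>"
proof -
  let ?u = "\<lambda>b \<gamma>. f b * \<xi> (mul (ginv b) \<gamma>) * \<sigma> b (mul (ginv b) \<gamma>)"
  have "l2norm \<Gamma> (conv f \<xi>) = l2norm \<Gamma> (\<lambda>\<gamma>. \<Sum>b\<in>spt \<Gamma> f. ?u b \<gamma>)"
    using conv_alt[OF f order_refl] by (intro l2norm_cong) (auto simp: spt_def)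
  also have "\<dots> \<le> (\<Sum>b\<in>spt \<Gamma> f. l2norm \<Gamma> (?u b))"
  proof (rule l2_sum_triangle[OF f])
    fix b assume b: "b \<in> spt \<Gamma> f"
    show "finite (spt \<Gamma> (?u b))"
      by (rule finite_subset[OF _ spt_transl[of "ginv b" \<xi>]]) (use b x in \<open>auto simp: spt_def\<close>)
  qed
  also have "\<dots> \<le> (\<Sum>b\<in>spt \<Gamma> f. cmod (f b) * l2norm \<Gamma> \<xi>)"
  proof (rule sum_mono)
    fix b assume b: "b \<in> spt \<Gamma> f"
    have "l2norm \<Gamma> (?u b) = l2norm \<Gamma> (\<lambda>\<gamma>. f b * \<xi> (mul (ginv b) \<gamma>))"
    proof -
      have "l2norm \<Gamma> (?u b) = sqrt (gs \<Gamma> (\<lambda>x. (cmod (?u b x))\<^sup>2))" by (rule l2norm_gs)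
      also have "gs \<Gamma> (\<lambda>x. (cmod (?u b x))\<^sup>2) = gs \<Gamma> (\<lambda>x. (cmod (f b * \<xi> (mul (ginv b) x)))\<^sup>2)"
        by (rule gs_cong) (use b in \<open>auto simp: spt_def norm_mult\<close>)
      finally show ?thesis by (simp add: l2norm_gs)
    qed
    also have "\<dots> = cmod (f b) * l2norm \<Gamma> \<xi>"
      using b by (simp add: l2_cmult l2_transl spt_def)
    finally show "l2norm \<Gamma> (?u b) \<le> cmod (f b) * l2norm \<Gamma> \<xi>" by simp
  qed
  also have "\<dots> = l1n \<Gamma> f * l2norm \<Gamma> \<xi>" by (simp add: l1n_def sum_distrib_right)
  finally show ?thesis .
qed

definition "nset f = {l2norm \<Gamma> (conv f \<xi>) | \<xi>. finite {\<gamma>\<in>\<Gamma>. \<xi> \<gamma> \<noteq> 0} \<and> l2norm \<Gamma> \<xi> \<le> 1}"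

lemma Nm_nset: "Nm f = Sup (nset f)" unfolding cstar_norm_def nset_def by simp

lemma nset_bdd: "finite (spt \<Gamma> f) \<Longrightarrow> bdd_above (nset f)"
proof -
  assume f: "finite (spt \<Gamma> f)"
  have "\<forall>y\<in>nset f. y \<le> l1n \<Gamma> f"
  proof
    fix y assume "y \<in> nset f"
    then obtain \<xi> where y: "y = l2norm \<Gamma> (conv f \<xi>)" "finite (spt \<Gamma> \<xi>)" "l2norm \<Gamma> \<xi> \<le> 1"
      unfolding nset_def spt_def by auto
    have "y \<le> l1n \<Gamma> f * l2norm \<Gamma> \<xi>" using conv_bound[OF f y(2)] y by simp
    also have "\<dots> \<le> l1n \<Gamma> f" using y(3) by (simp add: l1n_def mult_left_le sum_nonneg)
    finally show "y \<le> l1n \<Gamma> f" .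
  qed
  then show ?thesis by (auto simp: bdd_above_def)
qed

lemma nset_ne: "nset f \<noteq> {}"
  unfolding nset_def by (auto intro!: exI[where x="\<lambda>_. 0"] simp: l2norm_def)

lemma Nm_upper: "finite (spt \<Gamma> f) \<Longrightarrow> finite (spt \<Gamma> \<xi>) \<Longrightarrow> l2norm \<Gamma> \<xi> \<le> 1 \<Longrightarrow> l2norm \<Gamma> (conv f \<xi>) \<le> Nm f"
  unfolding Nm_nset by (rule cSup_upper[OF _ nset_bdd]) (auto simp: nset_def spt_def)

lemma Nm_least: "(\<And>\<xi>. finite (spt \<Gamma> \<xi>) \<Longrightarrow> l2norm \<Gamma> \<xi> \<le> 1 \<Longrightarrow> l2norm \<Gamma> (conv f \<xi>) \<le> M) \<Longrightarrow> Nm f \<le> M"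
  unfolding Nm_nset by (rule cSup_least[OF nset_ne]) (auto simp: nset_def spt_def)

lemma Nm_approx:
  assumes "finite (spt \<Gamma> f)" "\<epsilon> > 0"
  shows "\<exists>\<xi>. finite (spt \<Gamma> \<xi>) \<and> l2norm \<Gamma> \<xi> \<le> 1 \<and> Nm f - \<epsilon> < l2norm \<Gamma> (conv f \<xi>)"
proof -
  have "Nm f - \<epsilon> < Sup (nset f)" using assms by (simp add: Nm_nset)
  then obtain y where "y \<in> nset f" "Nm f - \<epsilon> < y"
    using less_cSup_iff[OF nset_ne nset_bdd[OF assms(1)]] by blast
  then show ?thesis unfolding nset_def spt_def by auto
qed

lemma conv_scale: "conv f (\<lambda>x. c * \<xi> x) = (\<lambda>\<gamma>. c * conv f \<xi> \<gamma>)"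
  unfolding tw_conv_def by (auto simp: sum_distrib_left intro!: sum.cong)

lemma Nm_upper_scaled:
  assumes f: "finite (spt \<Gamma> f)" and x: "finite (spt \<Gamma> \<xi>)"
  shows "l2norm \<Gamma> (conv f \<xi>) \<le> Nm f * l2norm \<Gamma> \<xi>"
proof (cases "l2norm \<Gamma> \<xi> = 0")
  case True
  then have "\<forall>x\<in>\<Gamma>. \<xi> x = 0" using x l2norm_eq[OF x order_refl]
    by (auto simp: L2_set_eq_0_iff spt_def)
  then have "\<forall>\<gamma>\<in>\<Gamma>. conv f \<xi> \<gamma> = 0" unfolding tw_conv_def by (auto intro!: sum.neutral)
  then have "l2norm \<Gamma> (conv f \<xi>) = l2norm \<Gamma> (\<lambda>_. 0)" by (intro l2norm_cong) auto
  then show ?thesis using True by (simp add: l2norm_def)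
next
  case False
  let ?c = "complex_of_real (1 / l2norm \<Gamma> \<xi>)"
  have pos: "l2norm \<Gamma> \<xi> > 0" using False l2norm_nonneg[of \<Gamma> \<xi>] by simp
  have n1: "l2norm \<Gamma> (\<lambda>x. ?c * \<xi> x) = 1" by (simp only: l2_cmult) (use pos in \<open>simp add: norm_divide\<close>)
  have fs: "finite (spt \<Gamma> (\<lambda>x. ?c * \<xi> x))" by (rule finite_subset[OF _ x]) (auto simp: spt_def)
  have "l2norm \<Gamma> (conv f (\<lambda>x. ?c * \<xi> x)) \<le> Nm f" using Nm_upper[OF f fs] n1 by simp
  moreover have "l2norm \<Gamma> (conv f (\<lambda>x. ?c * \<xi> x)) = (1 / l2norm \<Gamma> \<xi>) * l2norm \<Gamma> (conv f \<xi>)"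
    by (simp only: conv_scale l2_cmult) (use pos in \<open>simp add: norm_divide\<close>)
  ultimately have "(1 / l2norm \<Gamma> \<xi>) * l2norm \<Gamma> (conv f \<xi>) \<le> Nm f" by simp
  then show ?thesis using pos by (simp add: field_simps)
qed

lemma Nm_ge_l2:
  assumes f: "finite (spt \<Gamma> f)"
  shows "l2norm \<Gamma> f \<le> Nm f"
proof -
  define d where "d = (\<lambda>x. if x = e then (1::complex) else 0)"
  have fd: "finite (spt \<Gamma> d)" by (rule spt_finite_subset[of "{e}"]) (auto simp: d_def split: if_splits)
  have nd: "l2norm \<Gamma> d = 1"
    by (subst l2norm_eq[of "{e}"]) (auto simp: d_def spt_def)
  have "conv f d \<gamma> = f \<gamma>" if g: "\<gamma> \<in> \<Gamma>" for \<gamma>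
  proof -
    have "conv f d \<gamma> = (\<Sum>b\<in>insert \<gamma> (spt \<Gamma> f). f b * d (mul (ginv b) \<gamma>) * \<sigma> b (mul (ginv b) \<gamma>))"
      by (rule conv_alt) (use f g in \<open>auto simp: spt_def\<close>)
    also have "\<dots> = (\<Sum>b\<in>insert \<gamma> (spt \<Gamma> f). if b = \<gamma> then f \<gamma> else 0)"
      by (rule sum.cong) (use g in \<open>auto simp: d_def spt_def div_e div_e2\<close>)
    also have "\<dots> = f \<gamma>" using f by simp
    finally show ?thesis .
  qed
  then have "l2norm \<Gamma> (conv f d) = l2norm \<Gamma> f" by (intro l2norm_cong) auto
  then show ?thesis using Nm_upper[OF f fd] nd by simp
qed

lemma Nm_nonneg: "finite (spt \<Gamma> f) \<Longrightarrow> Nm f \<ge> 0"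
  by (rule order_trans[OF l2norm_nonneg Nm_ge_l2])

end


lemma sqrt_diff_sq: "a \<ge> 0 \<Longrightarrow> b \<ge> 0 \<Longrightarrow> (sqrt a - sqrt b)\<^sup>2 \<le> \<bar>a - b\<bar>"
proof -
  assume ab: "a \<ge> 0" "b \<ge> 0"
  define s t where "s = sqrt a" "t = sqrt b"
  have st: "s \<ge> 0" "t \<ge> 0" "a = s\<^sup>2" "b = t\<^sup>2" using ab by (auto simp: s_t_def)
  have "(s - t)\<^sup>2 = \<bar>s - t\<bar> * \<bar>s - t\<bar>" by (simp add: power2_eq_square abs_mult_self_eq)
  also have "\<dots> \<le> \<bar>s - t\<bar> * (s + t)" using st by (intro mult_left_mono) auto
  also have "\<dots> = \<bar>(s - t) * (s + t)\<bar>" using st by (simp add: abs_mult)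
  also have "\<dots> = \<bar>a - b\<bar>" using st by (simp add: power2_eq_square algebra_simps)
  finally show ?thesis by (simp add: s_t_def)
qed

context abgrp begin

abbreviation "gp c k \<equiv> (mul c ^^ k) e"

lemma gp_cl[simp]: "c \<in> \<Gamma> \<Longrightarrow> gp c k \<in> \<Gamma>"
  by (induction k) auto

lemma gp_Suc_shift: "c \<in> \<Gamma> \<Longrightarrow> x \<in> \<Gamma> \<Longrightarrow> mul (gp c k) (mul c x) = mul (gp c (Suc k)) x"
  by (simp add: assoc lcomm)

lemma spt_abs_diff: "b \<in> \<Gamma> \<Longrightarrow> finite (spt \<Gamma> (\<mu>::'c\<Rightarrow>real)) \<Longrightarrow> finite (spt \<Gamma> (\<lambda>x. \<bar>\<mu> (mul b x) - \<mu> x\<bar>))"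
  by (rule finite_subset[of _ "spt \<Gamma> (\<lambda>x. \<mu> (mul b x)) \<union> spt \<Gamma> \<mu>"])
     (auto simp: spt_def intro: spt_transl[unfolded spt_def])

lemma folner_l1:
  assumes fin: "finite B" and sub: "B \<subseteq> \<Gamma>" and d: "\<delta> > 0"
  shows "\<exists>\<mu>::'c\<Rightarrow>real. finite (spt \<Gamma> \<mu>) \<and> (\<forall>x\<in>\<Gamma>. \<mu> x \<ge> 0) \<and> gs \<Gamma> \<mu> = 1 \<and>
            (\<forall>b\<in>B. gs \<Gamma> (\<lambda>x. \<bar>\<mu> (mul b x) - \<mu> x\<bar>) \<le> \<delta>)"
  using fin sub
proof (induction B rule: finite_induct)
  case empty
  define \<mu> where "\<mu> = (\<lambda>x. if x = e then (1::real) else 0)"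
  have "finite (spt \<Gamma> \<mu>)" by (rule spt_finite_subset[of "{e}"]) (auto simp: \<mu>_def split: if_splits)
  moreover have "gs \<Gamma> \<mu> = 1" by (subst gs_eq'[of "{e}"]) (auto simp: \<mu>_def)
  ultimately show ?case by (intro exI[of _ \<mu>]) (auto simp: \<mu>_def)
next
  case (insert c B)
  then obtain \<mu> :: "'c \<Rightarrow> real" where mu: "finite (spt \<Gamma> \<mu>)" "\<forall>x\<in>\<Gamma>. \<mu> x \<ge> 0" "gs \<Gamma> \<mu> = 1"
      "\<forall>b\<in>B. gs \<Gamma> (\<lambda>x. \<bar>\<mu> (mul b x) - \<mu> x\<bar>) \<le> \<delta>" by auto
  have c: "c \<in> \<Gamma>" using insert by auto
  obtain m :: nat where m: "2 / \<delta> < real m" using reals_Archimedean2 by blast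
  have mpos: "real m > 0" using m d by (smt (verit) divide_pos_pos)
  have m2: "2 / real m \<le> \<delta>" using m d mpos by (simp add: field_simps)
  define s where "s = (\<lambda>k x. \<mu> (mul (gp c k) x))"
  define \<nu> where "\<nu> = (\<lambda>x. (1 / real m) * (\<Sum>k<m. s k x))"
  have fs: "finite (spt \<Gamma> (s k))" for k unfolding s_def using c mu(1) by (intro spt_transl) auto
  have fnu: "finite (spt \<Gamma> \<nu>)"
    by (rule finite_subset[OF _ spt_sum[of "{..<m}" \<Gamma> s]]) (use fs in \<open>auto simp: \<nu>_def spt_def\<close>)
  have nn: "\<forall>x\<in>\<Gamma>. \<nu> x \<ge> 0" unfolding \<nu>_def s_def
    by (intro ballI mult_nonneg_nonneg sum_nonneg) (use mu(2) c in auto)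
  have g1: "gs \<Gamma> \<nu> = 1"
  proof -
    have "gs \<Gamma> \<nu> = (1 / real m) * (\<Sum>k<m. gs \<Gamma> (s k))"
      unfolding \<nu>_def gs_cmult using fs by (simp add: gs_sum)
    also have "\<dots> = 1" using mpos c by (simp add: s_def gs_transl mu(3))
    finally show ?thesis .
  qed
  have bB: "gs \<Gamma> (\<lambda>x. \<bar>\<nu> (mul b x) - \<nu> x\<bar>) \<le> \<delta>" if b: "b \<in> B" for b
  proof -
    have bG: "b \<in> \<Gamma>" using b insert by auto
    define g where "g = (\<lambda>y. \<bar>\<mu> (mul b y) - \<mu> y\<bar>)"
    have fg: "finite (spt \<Gamma> g)" unfolding g_def using bG mu(1) by (rule spt_abs_diff)
    have fgk: "finite (spt \<Gamma> (\<lambda>x. g (mul (gp c k) x)))" for k using fg c by (intro spt_transl) auto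
    have "gs \<Gamma> (\<lambda>x. \<bar>\<nu> (mul b x) - \<nu> x\<bar>) \<le> gs \<Gamma> (\<lambda>x. (1 / real m) * (\<Sum>k<m. g (mul (gp c k) x)))"
    proof (rule gs_mono)
      show "finite (spt \<Gamma> (\<lambda>x. (1 / real m) * (\<Sum>k<m. g (mul (gp c k) x))))"
        by (rule finite_subset[OF _ spt_sum[of "{..<m}" \<Gamma> "\<lambda>k x. g (mul (gp c k) x)"]])
           (use fgk in \<open>auto simp: spt_def\<close>)
      fix x assume x: "x \<in> \<Gamma>"
      have "\<nu> (mul b x) - \<nu> x = (1 / real m) * (\<Sum>k<m. \<mu> (mul b (mul (gp c k) x)) - \<mu> (mul (gp c k) x))"
        by (simp add: \<nu>_def s_def sum_subtractf right_diff_distrib lcomm[of "gp c _" b x] bG c x)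
      then have "\<bar>\<nu> (mul b x) - \<nu> x\<bar> = (1 / real m) * \<bar>\<Sum>k<m. \<mu> (mul b (mul (gp c k) x)) - \<mu> (mul (gp c k) x)\<bar>"
        using mpos by (simp add: abs_mult)
      also have "\<dots> \<le> (1 / real m) * (\<Sum>k<m. g (mul (gp c k) x))"
        using mpos unfolding g_def by (intro mult_left_mono sum_abs) auto
      finally show "\<bar>\<nu> (mul b x) - \<nu> x\<bar> \<le> (1 / real m) * (\<Sum>k<m. g (mul (gp c k) x))" .
    qed simp
    also have "\<dots> = (1 / real m) * (\<Sum>k<m. gs \<Gamma> g)"
      unfolding gs_cmult using fgk c by (simp add: gs_sum gs_transl)
    also have "\<dots> \<le> (1 / real m) * (\<Sum>k<m. \<delta>)"
      using mu(4) b mpos by (intro mult_left_mono sum_mono) (auto simp: g_def)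
    also have "\<dots> = \<delta>" using mpos by simp
    finally show ?thesis .
  qed
  have cc: "gs \<Gamma> (\<lambda>x. \<bar>\<nu> (mul c x) - \<nu> x\<bar>) \<le> \<delta>"
  proof -
    have eq: "\<nu> (mul c x) - \<nu> x = (1 / real m) * (\<mu> (mul (gp c m) x) - \<mu> x)" if x: "x \<in> \<Gamma>" for x
    proof -
      have "\<nu> (mul c x) - \<nu> x = (1 / real m) * ((\<Sum>k<m. s k (mul c x)) - (\<Sum>k<m. s k x))"
        unfolding \<nu>_def by (simp only: right_diff_distrib)
      also have "(\<Sum>k<m. s k (mul c x)) - (\<Sum>k<m. s k x) = (\<Sum>k<m. s (Suc k) x - s k x)"
        by (simp add: s_def gp_Suc_shift c x sum_subtractf)
      also have "\<dots> = s m x - s 0 x" by (rule sum_lessThan_telescope)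
      also have "s m x - s 0 x = \<mu> (mul (gp c m) x) - \<mu> x" using x by (simp add: s_def)
      finally show ?thesis .
    qed
    have f1: "finite (spt \<Gamma> (\<lambda>x. \<bar>\<mu> (mul (gp c m) x)\<bar>))"
      by (rule finite_subset[OF _ spt_transl[OF gp_cl[OF c] mu(1), of m]]) (auto simp: spt_def)
    have f2: "finite (spt \<Gamma> (\<lambda>x. \<bar>\<mu> x\<bar>))" by (rule finite_subset[OF _ mu(1)]) (auto simp: spt_def)
    have a1: "gs \<Gamma> (\<lambda>x. \<bar>\<mu> x\<bar>) = 1" using mu(2,3) gs_cong[of \<Gamma> "\<lambda>x. \<bar>\<mu> x\<bar>" \<mu>] by auto
    have a2: "gs \<Gamma> (\<lambda>x. \<bar>\<mu> (mul (gp c m) x)\<bar>) = 1"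
      using gs_transl[OF gp_cl[OF c], of "\<lambda>x. \<bar>\<mu> x\<bar>" m] a1 by simp
    have "gs \<Gamma> (\<lambda>x. \<bar>\<nu> (mul c x) - \<nu> x\<bar>) \<le> gs \<Gamma> (\<lambda>x. (1 / real m) * (\<bar>\<mu> (mul (gp c m) x)\<bar> + \<bar>\<mu> x\<bar>))"
    proof (rule gs_mono)
      show "finite (spt \<Gamma> (\<lambda>x. (1 / real m) * (\<bar>\<mu> (mul (gp c m) x)\<bar> + \<bar>\<mu> x\<bar>)))"
        by (rule finite_subset[OF _ spt_add[OF f1 f2]]) (auto simp: spt_def)
      fix x assume x: "x \<in> \<Gamma>"
      have "\<bar>\<nu> (mul c x) - \<nu> x\<bar> = (1 / real m) * \<bar>\<mu> (mul (gp c m) x) - \<mu> x\<bar>"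
        using mpos by (simp only: eq[OF x] abs_mult) simp
      also have "\<dots> \<le> (1 / real m) * (\<bar>\<mu> (mul (gp c m) x)\<bar> + \<bar>\<mu> x\<bar>)"
        using mpos by (intro mult_left_mono abs_triangle_ineq4) simp
      finally show "\<bar>\<nu> (mul c x) - \<nu> x\<bar> \<le> (1 / real m) * (\<bar>\<mu> (mul (gp c m) x)\<bar> + \<bar>\<mu> x\<bar>)" .
    qed simp
    also have "\<dots> = (1 / real m) * (gs \<Gamma> (\<lambda>x. \<bar>\<mu> (mul (gp c m) x)\<bar>) + gs \<Gamma> (\<lambda>x. \<bar>\<mu> x\<bar>))"
      by (simp only: gs_cmult gs_add[OF f1 f2])
    also have "\<dots> = 2 / real m" by (simp add: a1 a2)
    finally show ?thesis using m2 by simp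
  qed
  show ?case using fnu nn g1 bB cc by (intro exI[of _ \<nu>]) auto
qed

lemma folner_l2:
  assumes fin: "finite B" and sub: "B \<subseteq> \<Gamma>" and d: "\<delta> > 0"
  shows "\<exists>\<eta>::'c\<Rightarrow>complex. finite (spt \<Gamma> \<eta>) \<and> l2norm \<Gamma> \<eta> = 1 \<and>
            (\<forall>b\<in>B. l2norm \<Gamma> (\<lambda>x. \<eta> (mul b x) - \<eta> x) \<le> \<delta>)"
proof -
  obtain \<mu> :: "'c \<Rightarrow> real" where mu: "finite (spt \<Gamma> \<mu>)" "\<forall>x\<in>\<Gamma>. \<mu> x \<ge> 0" "gs \<Gamma> \<mu> = 1"
      "\<forall>b\<in>B. gs \<Gamma> (\<lambda>x. \<bar>\<mu> (mul b x) - \<mu> x\<bar>) \<le> \<delta>\<^sup>2"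
    using folner_l1[OF fin sub, of "\<delta>\<^sup>2"] d by auto
  define \<eta> where "\<eta> = (\<lambda>x. complex_of_real (sqrt (\<mu> x)))"
  have f: "finite (spt \<Gamma> \<eta>)" by (rule finite_subset[OF _ mu(1)]) (auto simp: spt_def \<eta>_def)
  have n: "l2norm \<Gamma> \<eta> = 1"
  proof -
    have "gs \<Gamma> (\<lambda>x. (cmod (\<eta> x))\<^sup>2) = gs \<Gamma> \<mu>" by (rule gs_cong) (use mu(2) in \<open>auto simp: \<eta>_def\<close>)
    then show ?thesis by (simp add: l2norm_gs mu(3))
  qed
  have s: "l2norm \<Gamma> (\<lambda>x. \<eta> (mul b x) - \<eta> x) \<le> \<delta>" if b: "b \<in> B" for b
  proof -
    have bG: "b \<in> \<Gamma>" using b sub by auto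
    have "gs \<Gamma> (\<lambda>x. (cmod (\<eta> (mul b x) - \<eta> x))\<^sup>2) \<le> gs \<Gamma> (\<lambda>x. \<bar>\<mu> (mul b x) - \<mu> x\<bar>)"
    proof (rule gs_mono)
      show "finite (spt \<Gamma> (\<lambda>x. \<bar>\<mu> (mul b x) - \<mu> x\<bar>))" using bG mu(1) by (rule spt_abs_diff)
      fix x assume x: "x \<in> \<Gamma>"
      have "cmod (\<eta> (mul b x) - \<eta> x) = \<bar>sqrt (\<mu> (mul b x)) - sqrt (\<mu> x)\<bar>"
        unfolding \<eta>_def by (simp only: of_real_diff[symmetric] norm_of_real)
      then show "(cmod (\<eta> (mul b x) - \<eta> x))\<^sup>2 \<le> \<bar>\<mu> (mul b x) - \<mu> x\<bar>"
        using sqrt_diff_sq[of "\<mu> (mul b x)" "\<mu> x"] mu(2) x bG by simp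
    qed simp
    also have "\<dots> \<le> \<delta>\<^sup>2" using mu(4) b by auto
    finally show ?thesis unfolding l2norm_gs using d real_sqrt_le_mono by fastforce
  qed
  show ?thesis using f n s by blast
qed

end


lemma fin_fiber:
  assumes "finite (spt (A \<times> C) g)"
  shows "finite (spt A (\<lambda>a. gs C (\<lambda>c. g (a, c))))"
proof (rule finite_subset[of _ "fst ` spt (A \<times> C) g"])
  show "spt A (\<lambda>a. gs C (\<lambda>c. g (a, c))) \<subseteq> fst ` spt (A \<times> C) g"
  proof
    fix a assume a: "a \<in> spt A (\<lambda>a. gs C (\<lambda>c. g (a, c)))"
    then have "gs C (\<lambda>c. g (a, c)) \<noteq> 0" "a \<in> A" by (auto simp: spt_def)
    then obtain c where "c \<in> C" "g (a, c) \<noteq> 0" unfolding gs_def spt_def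
      by (metis (mono_tags, lifting) mem_Collect_eq sum.neutral)
    then show "a \<in> fst ` spt (A \<times> C) g" using \<open>a \<in> A\<close> by (force simp: spt_def)
  qed
qed (use assms in auto)

lemma l2norm_sq: "(l2norm A v)\<^sup>2 = gs A (\<lambda>x. (cmod (v x))\<^sup>2)"
  unfolding l2norm_gs by (simp add: gs_nonneg)

lemma L2_set_reindex: "inj_on g S \<Longrightarrow> L2_set f (g ` S) = L2_set (\<lambda>x. f (g x)) S"
  unfolding L2_set_def by (simp add: sum.reindex)

locale qhom = G: abgrp_sig \<Gamma> mul ginv e \<sigma> + K: abgrp_sig \<Gamma>' mul' ginv' e' \<sigma>'
  for \<Gamma> :: "'c set" and mul ginv e \<sigma> and \<Gamma>' :: "'d set" and mul' ginv' e' \<sigma>' +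
  fixes q :: "'c \<Rightarrow> 'd"
  assumes q_cl[simp]: "x \<in> \<Gamma> \<Longrightarrow> q x \<in> \<Gamma>'"
  and q_mul: "x \<in> \<Gamma> \<Longrightarrow> y \<in> \<Gamma> \<Longrightarrow> q (mul x y) = mul' (q x) (q y)"
begin

lemma q_e[simp]: "q e = e'"
proof -
  have "mul' (q e) (q e) = mul' (q e) e'" using q_mul[of e e] by simp
  then show ?thesis using K.lcancel[of "q e" "q e" e'] by simp
qed

lemma q_inv: "x \<in> \<Gamma> \<Longrightarrow> q (ginv x) = ginv' (q x)"
proof -
  assume x: "x \<in> \<Gamma>"
  have "mul' (q x) (q (ginv x)) = e'" using q_mul[of x "ginv x"] x by simp
  then show ?thesis using K.inv_unique[of "q x" "q (ginv x)"] x by simp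
qed

lemma q_div: "b \<in> \<Gamma> \<Longrightarrow> x \<in> \<Gamma> \<Longrightarrow> q (mul (ginv b) x) = mul' (ginv' (q b)) (q x)"
  by (simp add: q_mul q_inv)

lemma fs_pair:
  assumes X: "finite X" "X \<subseteq> \<Gamma>" and Y: "finite Y" "Y \<subseteq> \<Gamma>'"
  and w: "\<And>\<gamma> x. \<gamma> \<in> \<Gamma>' \<Longrightarrow> x \<in> \<Gamma> \<Longrightarrow> w (\<gamma>, x) \<noteq> 0 \<Longrightarrow> x \<in> X \<and> mul' \<gamma> (q x) \<in> Y"
  shows "finite (spt (\<Gamma>' \<times> \<Gamma>) w)"
proof (rule finite_subset[of _ "(\<lambda>(y, x). (mul' y (ginv' (q x)), x)) ` (Y \<times> X)"])
  show "spt (\<Gamma>' \<times> \<Gamma>) w \<subseteq> (\<lambda>(y, x). (mul' y (ginv' (q x)), x)) ` (Y \<times> X)"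
  proof
    fix p assume p: "p \<in> spt (\<Gamma>' \<times> \<Gamma>) w"
    obtain \<gamma> x where px: "p = (\<gamma>, x)" "\<gamma> \<in> \<Gamma>'" "x \<in> \<Gamma>" "w (\<gamma>, x) \<noteq> 0"
      using p by (auto simp: spt_def)
    have m: "x \<in> X" "mul' \<gamma> (q x) \<in> Y" using w px by auto
    have "p = (\<lambda>(y, x). (mul' y (ginv' (q x)), x)) (mul' \<gamma> (q x), x)"
      using px by (simp add: K.assoc)
    then show "p \<in> (\<lambda>(y, x). (mul' y (ginv' (q x)), x)) ` (Y \<times> X)"
      using m by (auto intro: rev_image_eqI)
  qed
qed (use X Y in auto)

lemma l2_pair:
  assumes xi: "finite (spt \<Gamma>' \<xi>)" and u: "finite (spt \<Gamma> u)" and c: "c \<in> \<Gamma>'"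
  and w: "\<And>\<gamma> x. \<gamma> \<in> \<Gamma>' \<Longrightarrow> x \<in> \<Gamma> \<Longrightarrow> cmod (w (\<gamma>, x)) = cmod (\<xi> (mul' c (mul' \<gamma> (q x)))) * cmod (u x)"
  shows "l2norm (\<Gamma>' \<times> \<Gamma>) w = l2norm \<Gamma>' \<xi> * l2norm \<Gamma> u"
    and "finite (spt (\<Gamma>' \<times> \<Gamma>) w)"
proof -
  show fw: "finite (spt (\<Gamma>' \<times> \<Gamma>) w)"
  proof (rule fs_pair[of "spt \<Gamma> u" "mul' (ginv' c) ` spt \<Gamma>' \<xi>"])
    fix \<gamma> x assume g: "\<gamma> \<in> \<Gamma>'" "x \<in> \<Gamma>" "w (\<gamma>, x) \<noteq> 0"
    then have nz: "\<xi> (mul' c (mul' \<gamma> (q x))) \<noteq> 0" "u x \<noteq> 0" using w[of \<gamma> x] by auto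
    have eq: "mul' \<gamma> (q x) = mul' (ginv' c) (mul' c (mul' \<gamma> (q x)))" using g c by simp
    have "mul' c (mul' \<gamma> (q x)) \<in> spt \<Gamma>' \<xi>" using nz g c by (auto simp: spt_def)
    then have "mul' \<gamma> (q x) \<in> mul' (ginv' c) ` spt \<Gamma>' \<xi>" using eq by (rule rev_image_eqI)
    then show "x \<in> spt \<Gamma> u \<and> mul' \<gamma> (q x) \<in> mul' (ginv' c) ` spt \<Gamma>' \<xi>"
      using nz g by (auto simp: spt_def)
  qed (use xi u c in \<open>auto simp: spt_def\<close>)
  have "gs (\<Gamma>' \<times> \<Gamma>) (\<lambda>p. (cmod (w p))\<^sup>2) = gs \<Gamma> (\<lambda>x. gs \<Gamma>' (\<lambda>\<gamma>. (cmod (w (\<gamma>, x)))\<^sup>2))"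
    by (rule gs_prod(1)) (use fw in \<open>simp add: gs_spt_sq\<close>)
  also have "\<dots> = gs \<Gamma> (\<lambda>x. (cmod (u x))\<^sup>2 * (l2norm \<Gamma>' \<xi>)\<^sup>2)"
  proof (rule gs_cong)
    fix x assume x: "x \<in> \<Gamma>"
    have "gs \<Gamma>' (\<lambda>\<gamma>. (cmod (w (\<gamma>, x)))\<^sup>2) = gs \<Gamma>' (\<lambda>\<gamma>. (cmod (u x))\<^sup>2 * (cmod (\<xi> (mul' (mul' c (q x)) \<gamma>)))\<^sup>2)"
    proof (rule gs_cong)
      fix \<gamma> assume g: "\<gamma> \<in> \<Gamma>'"
      have "mul' c (mul' \<gamma> (q x)) = mul' (mul' c (q x)) \<gamma>"
        using x c g by (simp add: K.assoc K.comm[of \<gamma> "q x"])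
      then show "(cmod (w (\<gamma>, x)))\<^sup>2 = (cmod (u x))\<^sup>2 * (cmod (\<xi> (mul' (mul' c (q x)) \<gamma>)))\<^sup>2"
        using w[OF g x] by (simp add: power_mult_distrib)
    qed
    also have "\<dots> = (cmod (u x))\<^sup>2 * gs \<Gamma>' (\<lambda>\<gamma>. (cmod (\<xi> \<gamma>))\<^sup>2)"
      using x c K.gs_transl[of "mul' c (q x)" "\<lambda>\<gamma>. (cmod (\<xi> \<gamma>))\<^sup>2"] by (simp add: gs_cmult)
    finally show "gs \<Gamma>' (\<lambda>\<gamma>. (cmod (w (\<gamma>, x)))\<^sup>2) = (cmod (u x))\<^sup>2 * (l2norm \<Gamma>' \<xi>)\<^sup>2"
      by (simp add: l2norm_gs gs_nonneg)
  qed
  also have "\<dots> = gs \<Gamma> (\<lambda>x. (l2norm \<Gamma>' \<xi>)\<^sup>2 * (cmod (u x))\<^sup>2)"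
    by (rule gs_cong) simp
  also have "\<dots> = (l2norm \<Gamma>' \<xi>)\<^sup>2 * gs \<Gamma> (\<lambda>x. (cmod (u x))\<^sup>2)"
    by (rule gs_cmult)
  also have "\<dots> = (l2norm \<Gamma>' \<xi>)\<^sup>2 * (l2norm \<Gamma> u)\<^sup>2"
    by (simp add: l2norm_gs gs_nonneg)
  finally have sq: "gs (\<Gamma>' \<times> \<Gamma>) (\<lambda>p. (cmod (w p))\<^sup>2) = (l2norm \<Gamma>' \<xi> * l2norm \<Gamma> u)\<^sup>2"
    by (simp only: power_mult_distrib)
  have nn: "l2norm \<Gamma>' \<xi> * l2norm \<Gamma> u \<ge> 0" by (simp add: l2norm_nonneg)
  show "l2norm (\<Gamma>' \<times> \<Gamma>) w = l2norm \<Gamma>' \<xi> * l2norm \<Gamma> u"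
    unfolding l2norm_gs[of "\<Gamma>' \<times> \<Gamma>" w] sq real_sqrt_abs using nn by (rule abs_of_nonneg)
qed

end


context qhom begin

lemma upper_main:
  assumes B: "finite B" "B \<subseteq> \<Gamma>" "inj_on q B"
  and h: "\<And>x. x \<in> \<Gamma> \<Longrightarrow> h x \<noteq> 0 \<Longrightarrow> x \<in> B"
  and F1: "\<And>b. b \<in> B \<Longrightarrow> F (q b) = h b"
  and F0: "\<And>\<psi>. \<psi> \<in> \<Gamma>' \<Longrightarrow> \<psi> \<notin> q ` B \<Longrightarrow> F \<psi> = 0"
  and eta: "finite (spt \<Gamma> \<eta>)" "l2norm \<Gamma> \<eta> = 1"
  and xi: "finite (spt \<Gamma>' \<xi>)"
  shows "l2norm \<Gamma>' (K.conv F \<xi>) \<le> (G.Nm h + (\<Sum>b\<in>B. cmod (h b) *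
     (l2norm \<Gamma> (\<lambda>x. \<eta> (mul (ginv b) x) - \<eta> x) + l2norm \<Gamma> (\<lambda>x. \<eta> x * (\<sigma> b x - \<sigma>' (q b) (q x)))))) * l2norm \<Gamma>' \<xi>"
proof -
  have BG: "\<And>b. b \<in> B \<Longrightarrow> b \<in> \<Gamma>" using B by auto
  have fh: "finite (spt \<Gamma> h)" by (rule finite_subset[OF _ B(1)]) (use h in \<open>auto simp: spt_def\<close>)
  have sh: "spt \<Gamma> h \<subseteq> B" using h by (auto simp: spt_def)
  have sF: "spt \<Gamma>' F \<subseteq> q ` B" using F0 by (auto simp: spt_def)
  have qB: "q ` B \<subseteq> \<Gamma>'" using BG by auto
  define Z where "Z = (\<lambda>b \<gamma> x. mul' (ginv' (q b)) (mul' \<gamma> (q x)))"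
  define \<Psi> where "\<Psi> = (\<lambda>\<gamma> x. \<xi> (mul' \<gamma> (q x)) * \<eta> x * \<sigma>' \<gamma> (q x))"
  define P where "P = (\<lambda>p. G.conv h (\<Psi> (fst p)) (snd p))"
  define A where "A = (\<lambda>p. K.conv F \<xi> (mul' (fst p) (q (snd p))) * \<eta> (snd p) * \<sigma>' (fst p) (q (snd p)))"
  define v where "v = (\<lambda>b x. \<eta> (mul (ginv b) x) * \<sigma> b x - \<eta> x * \<sigma>' (q b) (q x))"
  define D where "D = (\<lambda>b p. \<xi> (Z b (fst p) (snd p)) * (\<sigma>' (fst p) (q (snd p)) * \<sigma>' (q b) (fst p)) * (h b * v b (snd p)))"
  define err where "err = (\<lambda>b. l2norm \<Gamma> (\<lambda>x. \<eta> (mul (ginv b) x) - \<eta> x) + l2norm \<Gamma> (\<lambda>x. \<eta> x * (\<sigma> b x - \<sigma>' (q b) (q x))))"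
  have Zcl: "Z b \<gamma> x \<in> \<Gamma>'" if "b \<in> \<Gamma>" "\<gamma> \<in> \<Gamma>'" "x \<in> \<Gamma>" for b \<gamma> x
    using that by (simp add: Z_def)
  have Psum: "P (\<gamma>, x) = (\<Sum>b\<in>B. h b * \<Psi> \<gamma> (mul (ginv b) x) * \<sigma> b (mul (ginv b) x))" for \<gamma> x
    unfolding P_def by (simp add: G.conv_alt[OF B(1) sh B(2)])
  have Asum: "A (\<gamma>, x) = (\<Sum>b\<in>B. h b * \<xi> (Z b \<gamma> x) * \<sigma>' (q b) (Z b \<gamma> x)) * \<eta> x * \<sigma>' \<gamma> (q x)" for \<gamma> x
  proof -
    have "K.conv F \<xi> (mul' \<gamma> (q x)) = (\<Sum>\<psi>\<in>q ` B. F \<psi> * \<xi> (mul' (ginv' \<psi>) (mul' \<gamma> (q x))) * \<sigma>' \<psi> (mul' (ginv' \<psi>) (mul' \<gamma> (q x))))"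
      by (rule K.conv_alt) (use B sF qB in auto)
    also have "\<dots> = (\<Sum>b\<in>B. h b * \<xi> (Z b \<gamma> x) * \<sigma>' (q b) (Z b \<gamma> x))"
      by (subst sum.reindex[OF B(3)]) (simp add: F1 Z_def)
    finally show ?thesis by (simp add: A_def)
  qed
  have ident: "A (\<gamma>, x) = P (\<gamma>, x) + (\<Sum>b\<in>B. - D b (\<gamma>, x))" if g: "\<gamma> \<in> \<Gamma>'" and x: "x \<in> \<Gamma>" for \<gamma> x
  proof -
    have trm: "h b * \<xi> (Z b \<gamma> x) * \<sigma>' (q b) (Z b \<gamma> x) * \<eta> x * \<sigma>' \<gamma> (q x) =
       h b * \<Psi> \<gamma> (mul (ginv b) x) * \<sigma> b (mul (ginv b) x) - D b (\<gamma>, x)" if b: "b \<in> B" for b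
    proof -
      have bG: "b \<in> \<Gamma>" using b BG by auto
      have z1: "mul' \<gamma> (q (mul (ginv b) x)) = Z b \<gamma> x"
        using bG g x by (simp add: q_div Z_def K.lcomm[of \<gamma> "ginv' (q b)" "q x"])
      have s1: "\<sigma>' \<gamma> (q (mul (ginv b) x)) = \<sigma>' (q b) \<gamma> * \<sigma>' \<gamma> (q x)"
        using bG g x by (simp add: q_div K.sig_mr K.sig_ginv_r)
      have s2: "\<sigma> b (mul (ginv b) x) = \<sigma> b x" using bG x by (rule G.sig_shift)
      have "\<sigma>' (q b) (Z b \<gamma> x) = \<sigma>' (q b) (mul' \<gamma> (q x))"
        unfolding Z_def by (rule K.sig_shift) (use bG g x in auto)
      also have "\<dots> = \<sigma>' (q b) \<gamma> * \<sigma>' (q b) (q x)" by (rule K.sig_mr) (use bG g x in auto)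
      finally have s3: "\<sigma>' (q b) (Z b \<gamma> x) = \<sigma>' (q b) \<gamma> * \<sigma>' (q b) (q x)" .
      show ?thesis unfolding \<Psi>_def z1 s1 s2 s3 D_def v_def by (simp add: algebra_simps)
    qed
    have "A (\<gamma>, x) = (\<Sum>b\<in>B. h b * \<xi> (Z b \<gamma> x) * \<sigma>' (q b) (Z b \<gamma> x) * \<eta> x * \<sigma>' \<gamma> (q x))"
      by (simp add: Asum sum_distrib_right)
    also have "\<dots> = (\<Sum>b\<in>B. h b * \<Psi> \<gamma> (mul (ginv b) x) * \<sigma> b (mul (ginv b) x) - D b (\<gamma>, x))"
      by (rule sum.cong) (simp_all add: trm)
    also have "\<dots> = P (\<gamma>, x) + (\<Sum>b\<in>B. - D b (\<gamma>, x))"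
      by (simp add: Psum sum_subtractf sum_negf)
    finally show ?thesis .
  qed
  have nA: "l2norm (\<Gamma>' \<times> \<Gamma>) A = l2norm \<Gamma>' (K.conv F \<xi>)"
    and fA: "finite (spt (\<Gamma>' \<times> \<Gamma>) A)"
  proof -
    have fc: "finite (spt \<Gamma>' (K.conv F \<xi>))"
      using K.conv_spt[OF finite_subset[OF sF] xi] B by auto
    have w: "cmod (A (\<gamma>, x)) = cmod (K.conv F \<xi> (mul' e' (mul' \<gamma> (q x)))) * cmod (\<eta> x)"
      if "\<gamma> \<in> \<Gamma>'" "x \<in> \<Gamma>" for \<gamma> x
      using that by (simp add: A_def norm_mult)
    show "l2norm (\<Gamma>' \<times> \<Gamma>) A = l2norm \<Gamma>' (K.conv F \<xi>)"
      using l2_pair(1)[OF fc eta(1) K.e_cl w] eta(2) by simp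
    show "finite (spt (\<Gamma>' \<times> \<Gamma>) A)" using l2_pair(2)[OF fc eta(1) K.e_cl w] .
  qed
  have fPsi: "finite (spt \<Gamma> (\<Psi> \<gamma>))" for \<gamma>
    by (rule finite_subset[OF _ eta(1)]) (auto simp: spt_def \<Psi>_def)
  have wPsi: "cmod (\<Psi> (fst p) (snd p)) = cmod (\<xi> (mul' e' (mul' \<gamma> (q x)))) * cmod (\<eta> x)"
    if "p = (\<gamma>, x)" "\<gamma> \<in> \<Gamma>'" "x \<in> \<Gamma>" for p \<gamma> x
    using that by (simp add: \<Psi>_def norm_mult)
  have nPsi: "l2norm (\<Gamma>' \<times> \<Gamma>) (\<lambda>p. \<Psi> (fst p) (snd p)) = l2norm \<Gamma>' \<xi>"
    and fPsi2: "finite (spt (\<Gamma>' \<times> \<Gamma>) (\<lambda>p. \<Psi> (fst p) (snd p)))"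
    using l2_pair[OF xi eta(1) K.e_cl, of "\<lambda>p. \<Psi> (fst p) (snd p)"] wPsi eta(2) by auto
  have fP: "finite (spt (\<Gamma>' \<times> \<Gamma>) P)"
  proof (rule fs_pair[of "(\<lambda>(b, s). mul b s) ` (B \<times> spt \<Gamma> \<eta>)" "(\<lambda>(s, b). mul' s (q b)) ` (spt \<Gamma>' \<xi> \<times> B)"])
    fix \<gamma> x assume g: "\<gamma> \<in> \<Gamma>'" "x \<in> \<Gamma>" "P (\<gamma>, x) \<noteq> 0"
    then obtain b where b: "b \<in> B" "h b * \<Psi> \<gamma> (mul (ginv b) x) * \<sigma> b (mul (ginv b) x) \<noteq> 0"
      unfolding Psum by (metis (no_types, lifting) sum.neutral)
    have bG: "b \<in> \<Gamma>" using b BG by auto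
    have nz: "\<xi> (mul' \<gamma> (q (mul (ginv b) x))) \<noteq> 0" "\<eta> (mul (ginv b) x) \<noteq> 0"
      using b(2) by (auto simp: \<Psi>_def)
    have "x = (\<lambda>(b, s). mul b s) (b, mul (ginv b) x)" using bG g by simp
    moreover have "(b, mul (ginv b) x) \<in> B \<times> spt \<Gamma> \<eta>" using b nz bG g by (auto simp: spt_def)
    ultimately have x1: "x \<in> (\<lambda>(b, s). mul b s) ` (B \<times> spt \<Gamma> \<eta>)" by (rule image_eqI)
    have "mul' \<gamma> (q x) = (\<lambda>(s, b). mul' s (q b)) (mul' \<gamma> (q (mul (ginv b) x)), b)"
      using bG g by (simp add: q_div K.assoc K.comm[of "ginv' (q b)" "q x"])
    moreover have "(mul' \<gamma> (q (mul (ginv b) x)), b) \<in> spt \<Gamma>' \<xi> \<times> B" using b nz bG g by (auto simp: spt_def)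
    ultimately have x2: "mul' \<gamma> (q x) \<in> (\<lambda>(s, b). mul' s (q b)) ` (spt \<Gamma>' \<xi> \<times> B)" by (rule image_eqI)
    show "x \<in> (\<lambda>(b, s). mul b s) ` (B \<times> spt \<Gamma> \<eta>) \<and> mul' \<gamma> (q x) \<in> (\<lambda>(s, b). mul' s (q b)) ` (spt \<Gamma>' \<xi> \<times> B)"
      using x1 x2 by simp
  qed (use B eta xi BG in \<open>auto simp: spt_def\<close>)
  have nP: "l2norm (\<Gamma>' \<times> \<Gamma>) P \<le> G.Nm h * l2norm \<Gamma>' \<xi>"
  proof -
    have nn: "G.Nm h \<ge> 0" using fh by (rule G.Nm_nonneg)
    have Pfib: "(\<lambda>x. P (\<gamma>, x)) = G.conv h (\<Psi> \<gamma>)" for \<gamma> by (rule ext) (simp add: P_def)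
    have Psifib: "(\<lambda>x. \<Psi> (fst (\<gamma>, x)) (snd (\<gamma>, x))) = \<Psi> \<gamma>" for \<gamma> by (rule ext) simp
    have "gs \<Gamma>' (\<lambda>\<gamma>. (l2norm \<Gamma> (\<Psi> \<gamma>))\<^sup>2) = gs \<Gamma>' (\<lambda>\<gamma>. gs \<Gamma> (\<lambda>x. (cmod (\<Psi> (fst (\<gamma>, x)) (snd (\<gamma>, x))))\<^sup>2))"
      by (simp only: fst_conv snd_conv l2norm_sq)
    also have "\<dots> = gs (\<Gamma>' \<times> \<Gamma>) (\<lambda>p. (cmod (\<Psi> (fst p) (snd p)))\<^sup>2)"
      by (rule gs_prod(2)[of \<Gamma>' \<Gamma> "\<lambda>p. (cmod (\<Psi> (fst p) (snd p)))\<^sup>2", symmetric]) (use fPsi2 in \<open>simp only: gs_spt_sq\<close>)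
    also have "\<dots> = (l2norm \<Gamma>' \<xi>)\<^sup>2"
      by (simp only: l2norm_sq[symmetric] nPsi)
    finally have psq: "gs \<Gamma>' (\<lambda>\<gamma>. (l2norm \<Gamma> (\<Psi> \<gamma>))\<^sup>2) = (l2norm \<Gamma>' \<xi>)\<^sup>2" .
    have "(l2norm (\<Gamma>' \<times> \<Gamma>) P)\<^sup>2 = gs (\<Gamma>' \<times> \<Gamma>) (\<lambda>p. (cmod (P p))\<^sup>2)" by (rule l2norm_sq)
    also have "\<dots> = gs \<Gamma>' (\<lambda>\<gamma>. gs \<Gamma> (\<lambda>x. (cmod (P (\<gamma>, x)))\<^sup>2))"
      by (rule gs_prod(2)[of \<Gamma>' \<Gamma> "\<lambda>p. (cmod (P p))\<^sup>2"]) (use fP in \<open>simp only: gs_spt_sq\<close>)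
    also have "\<dots> = gs \<Gamma>' (\<lambda>\<gamma>. (l2norm \<Gamma> (G.conv h (\<Psi> \<gamma>)))\<^sup>2)"
      by (rule gs_cong) (simp only: l2norm_sq P_def fst_conv snd_conv)
    also have "\<dots> \<le> gs \<Gamma>' (\<lambda>\<gamma>. (G.Nm h)\<^sup>2 * (l2norm \<Gamma> (\<Psi> \<gamma>))\<^sup>2)"
    proof (rule gs_mono)
      have "finite (spt \<Gamma>' (\<lambda>\<gamma>. gs \<Gamma> (\<lambda>x. (cmod (\<Psi> (fst (\<gamma>, x)) (snd (\<gamma>, x))))\<^sup>2)))"
        by (rule fin_fiber[of \<Gamma>' \<Gamma> "\<lambda>p. (cmod (\<Psi> (fst p) (snd p)))\<^sup>2"]) (use fPsi2 in \<open>simp only: gs_spt_sq\<close>)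
      then have "finite (spt \<Gamma>' (\<lambda>\<gamma>. (l2norm \<Gamma> (\<Psi> \<gamma>))\<^sup>2))"
        by (simp only: fst_conv snd_conv l2norm_sq)
      then show "finite (spt \<Gamma>' (\<lambda>\<gamma>. (G.Nm h)\<^sup>2 * (l2norm \<Gamma> (\<Psi> \<gamma>))\<^sup>2))"
        by (rule finite_subset[rotated]) (auto simp: spt_def)
      fix \<gamma> assume g: "\<gamma> \<in> \<Gamma>'"
      show "0 \<le> (l2norm \<Gamma> (G.conv h (\<Psi> \<gamma>)))\<^sup>2" by simp
      have "l2norm \<Gamma> (G.conv h (\<Psi> \<gamma>)) \<le> G.Nm h * l2norm \<Gamma> (\<Psi> \<gamma>)"
        by (rule G.Nm_upper_scaled[OF fh fPsi])
      then have "(l2norm \<Gamma> (G.conv h (\<Psi> \<gamma>)))\<^sup>2 \<le> (G.Nm h * l2norm \<Gamma> (\<Psi> \<gamma>))\<^sup>2"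
        by (intro power_mono) (simp_all add: l2norm_nonneg)
      then show "(l2norm \<Gamma> (G.conv h (\<Psi> \<gamma>)))\<^sup>2 \<le> (G.Nm h)\<^sup>2 * (l2norm \<Gamma> (\<Psi> \<gamma>))\<^sup>2"
        by (simp only: power_mult_distrib)
    qed
    also have "\<dots> = (G.Nm h)\<^sup>2 * gs \<Gamma>' (\<lambda>\<gamma>. (l2norm \<Gamma> (\<Psi> \<gamma>))\<^sup>2)"
      by (rule gs_cmult)
    also have "\<dots> = (G.Nm h)\<^sup>2 * (l2norm \<Gamma>' \<xi>)\<^sup>2"
      by (simp only: psq)
    finally have "(l2norm (\<Gamma>' \<times> \<Gamma>) P)\<^sup>2 \<le> (G.Nm h * l2norm \<Gamma>' \<xi>)\<^sup>2"
      by (simp only: power_mult_distrib)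
    then show ?thesis by (rule power2_le_imp_le) (rule mult_nonneg_nonneg[OF nn l2norm_nonneg])
  qed
  have fv: "finite (spt \<Gamma> (v b))" if "b \<in> B" for b
  proof -
    have bG: "b \<in> \<Gamma>" using that BG by auto
    have "finite (spt \<Gamma> (\<lambda>x. \<eta> (mul (ginv b) x)))" using bG eta(1) by (intro G.spt_transl) auto
    then show ?thesis by (rule finite_subset[rotated, OF finite_UnI[OF _ eta(1)]]) (auto simp: spt_def v_def)
  qed
  have nD: "l2norm (\<Gamma>' \<times> \<Gamma>) (D b) \<le> cmod (h b) * err b * l2norm \<Gamma>' \<xi>"
    and fD: "finite (spt (\<Gamma>' \<times> \<Gamma>) (D b))" if b: "b \<in> B" for b
  proof -
    have bG: "b \<in> \<Gamma>" using b BG by auto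
    have fu: "finite (spt \<Gamma> (\<lambda>x. h b * v b x))" by (rule finite_subset[OF _ fv[OF b]]) (auto simp: spt_def)
    have w: "cmod (D b (\<gamma>, x)) = cmod (\<xi> (mul' (ginv' (q b)) (mul' \<gamma> (q x)))) * cmod (h b * v b x)"
      if "\<gamma> \<in> \<Gamma>'" "x \<in> \<Gamma>" for \<gamma> x
      using that bG by (simp add: D_def Z_def norm_mult)
    have eqD: "l2norm (\<Gamma>' \<times> \<Gamma>) (D b) = l2norm \<Gamma>' \<xi> * l2norm \<Gamma> (\<lambda>x. h b * v b x)"
      using l2_pair(1)[OF xi fu _ w] bG by simp
    show "finite (spt (\<Gamma>' \<times> \<Gamma>) (D b))" using l2_pair(2)[OF xi fu _ w] bG by simp
    have "l2norm \<Gamma> (v b) \<le> err b"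
    proof -
      have f1: "finite (spt \<Gamma> (\<lambda>x. (\<eta> (mul (ginv b) x) - \<eta> x) * \<sigma> b x))"
      proof -
        have "finite (spt \<Gamma> (\<lambda>x. \<eta> (mul (ginv b) x)))" using bG eta(1) by (intro G.spt_transl) auto
        then show ?thesis by (rule finite_subset[rotated, OF finite_UnI[OF _ eta(1)]]) (auto simp: spt_def)
      qed
      have f2: "finite (spt \<Gamma> (\<lambda>x. \<eta> x * (\<sigma> b x - \<sigma>' (q b) (q x))))"
        by (rule finite_subset[OF _ eta(1)]) (auto simp: spt_def)
      have "l2norm \<Gamma> (v b) = l2norm \<Gamma> (\<lambda>x. (\<eta> (mul (ginv b) x) - \<eta> x) * \<sigma> b x + \<eta> x * (\<sigma> b x - \<sigma>' (q b) (q x)))"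
        by (rule l2norm_cong) (simp add: v_def algebra_simps)
      also have "\<dots> \<le> l2norm \<Gamma> (\<lambda>x. (\<eta> (mul (ginv b) x) - \<eta> x) * \<sigma> b x) + l2norm \<Gamma> (\<lambda>x. \<eta> x * (\<sigma> b x - \<sigma>' (q b) (q x)))"
        by (rule l2_triangle[OF f1 f2])
      also have "l2norm \<Gamma> (\<lambda>x. (\<eta> (mul (ginv b) x) - \<eta> x) * \<sigma> b x) = l2norm \<Gamma> (\<lambda>x. \<eta> (mul (ginv b) x) - \<eta> x)"
        unfolding l2norm_gs by (rule arg_cong[where f=sqrt], rule gs_cong) (use bG in \<open>simp add: norm_mult\<close>)
      finally show ?thesis by (simp add: err_def)
    qed
    then have "l2norm \<Gamma> (\<lambda>x. h b * v b x) \<le> cmod (h b) * err b"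
      by (simp add: l2_cmult mult_left_mono)
    then show "l2norm (\<Gamma>' \<times> \<Gamma>) (D b) \<le> cmod (h b) * err b * l2norm \<Gamma>' \<xi>"
      unfolding eqD by (simp add: mult.commute mult_left_mono l2norm_nonneg)
  qed
  have "l2norm \<Gamma>' (K.conv F \<xi>) = l2norm (\<Gamma>' \<times> \<Gamma>) (\<lambda>p. P p + (\<Sum>b\<in>B. - D b p))"
    unfolding nA[symmetric] by (rule l2norm_cong) (auto simp: ident)
  also have "\<dots> \<le> l2norm (\<Gamma>' \<times> \<Gamma>) P + l2norm (\<Gamma>' \<times> \<Gamma>) (\<lambda>p. \<Sum>b\<in>B. - D b p)"
  proof (rule l2_triangle[OF fP])
    show "finite (spt (\<Gamma>' \<times> \<Gamma>) (\<lambda>p. \<Sum>b\<in>B. - D b p))"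
      by (rule spt_sum[OF B(1)], rule finite_subset[OF _ fD]) (auto simp: spt_def)
  qed
  also have "l2norm (\<Gamma>' \<times> \<Gamma>) (\<lambda>p. \<Sum>b\<in>B. - D b p) \<le> (\<Sum>b\<in>B. l2norm (\<Gamma>' \<times> \<Gamma>) (\<lambda>p. - D b p))"
    by (rule l2_sum_triangle[OF B(1)], rule finite_subset[OF _ fD]) (auto simp: spt_def)
  also have "(\<Sum>b\<in>B. l2norm (\<Gamma>' \<times> \<Gamma>) (\<lambda>p. - D b p)) \<le> (\<Sum>b\<in>B. cmod (h b) * err b * l2norm \<Gamma>' \<xi>)"
  proof (rule sum_mono)
    fix b assume b: "b \<in> B"
    have "l2norm (\<Gamma>' \<times> \<Gamma>) (\<lambda>p. - D b p) = l2norm (\<Gamma>' \<times> \<Gamma>) (\<lambda>p. (-1) * D b p)" by simp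
    also have "\<dots> = l2norm (\<Gamma>' \<times> \<Gamma>) (D b)" by (simp only: l2_cmult) simp
    finally show "l2norm (\<Gamma>' \<times> \<Gamma>) (\<lambda>p. - D b p) \<le> cmod (h b) * err b * l2norm \<Gamma>' \<xi>" using nD[OF b] by simp
  qed
  finally have "l2norm \<Gamma>' (K.conv F \<xi>) \<le> G.Nm h * l2norm \<Gamma>' \<xi> + (\<Sum>b\<in>B. cmod (h b) * err b * l2norm \<Gamma>' \<xi>)"
    using nP by linarith
  moreover have "(\<Sum>b\<in>B. cmod (h b) * err b * l2norm \<Gamma>' \<xi>) = (\<Sum>b\<in>B. cmod (h b) * err b) * l2norm \<Gamma>' \<xi>"
    by (rule sum_distrib_right[symmetric])
  ultimately have "l2norm \<Gamma>' (K.conv F \<xi>) \<le> (G.Nm h + (\<Sum>b\<in>B. cmod (h b) * err b)) * l2norm \<Gamma>' \<xi>"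
    by (simp only: distrib_right)
  then show ?thesis unfolding err_def .
qed

lemma upper:
  assumes B: "finite B" "B \<subseteq> \<Gamma>" "inj_on q B"
  and h: "\<And>x. x \<in> \<Gamma> \<Longrightarrow> h x \<noteq> 0 \<Longrightarrow> x \<in> B"
  and F1: "\<And>b. b \<in> B \<Longrightarrow> F (q b) = h b"
  and F0: "\<And>\<psi>. \<psi> \<in> \<Gamma>' \<Longrightarrow> \<psi> \<notin> q ` B \<Longrightarrow> F \<psi> = 0"
  and eta: "finite (spt \<Gamma> \<eta>)" "l2norm \<Gamma> \<eta> = 1"
  shows "K.Nm F \<le> G.Nm h + (\<Sum>b\<in>B. cmod (h b) *
     (l2norm \<Gamma> (\<lambda>x. \<eta> (mul (ginv b) x) - \<eta> x) + l2norm \<Gamma> (\<lambda>x. \<eta> x * (\<sigma> b x - \<sigma>' (q b) (q x)))))"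
    (is "_ \<le> ?C")
proof (rule K.Nm_least)
  fix \<xi> assume xi: "finite (spt \<Gamma>' \<xi>)" "l2norm \<Gamma>' \<xi> \<le> 1"
  have fh: "finite (spt \<Gamma> h)" by (rule finite_subset[OF _ B(1)]) (use h in \<open>auto simp: spt_def\<close>)
  have C0: "?C \<ge> 0"
    by (intro add_nonneg_nonneg G.Nm_nonneg[OF fh] sum_nonneg mult_nonneg_nonneg) (simp_all add: l2norm_nonneg)
  have "l2norm \<Gamma>' (K.conv F \<xi>) \<le> ?C * l2norm \<Gamma>' \<xi>"
    by (rule upper_main[where h=h and F=F and \<eta>=\<eta> and \<xi>=\<xi> and B=B, OF B h F1 F0 eta xi(1)])
  also have "\<dots> \<le> ?C * 1" using xi(2) C0 by (rule mult_left_mono)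
  finally show "l2norm \<Gamma>' (K.conv F \<xi>) \<le> ?C" by simp
qed

lemma lower:
  assumes B: "finite B" "B \<subseteq> \<Gamma>"
  and h: "\<And>x. x \<in> \<Gamma> \<Longrightarrow> h x \<noteq> 0 \<Longrightarrow> x \<in> B"
  and F1: "\<And>b. b \<in> B \<Longrightarrow> F (q b) = h b"
  and F0: "\<And>\<psi>. \<psi> \<in> \<Gamma>' \<Longrightarrow> \<psi> \<notin> q ` B \<Longrightarrow> F \<psi> = 0"
  and xi: "finite (spt \<Gamma> \<xi>)" "l2norm \<Gamma> \<xi> \<le> 1"
  and T: "finite T" "T \<subseteq> \<Gamma>"
  and inj: "inj_on q (B \<union> T \<union> spt \<Gamma> \<xi> \<union> (\<lambda>(b, t). mul (ginv b) t) ` (B \<times> T))"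
  shows "L2_set (\<lambda>t. cmod (\<Sum>b\<in>B. h b * \<xi> (mul (ginv b) t) * \<sigma>' (q b) (q (mul (ginv b) t)))) T \<le> K.Nm F"
proof -
  define S where "S = spt \<Gamma> \<xi>"
  define Dom where "Dom = B \<union> T \<union> S \<union> (\<lambda>(b, t). mul (ginv b) t) ` (B \<times> T)"
  have injD: "inj_on q Dom" using inj by (simp add: Dom_def S_def)
  have DomG: "Dom \<subseteq> \<Gamma>" using B T by (auto simp: Dom_def S_def spt_def intro!: G.mul_cl G.inv_cl)
  have SD: "S \<subseteq> Dom" by (auto simp: Dom_def)
  define \<xi>' where "\<xi>' = (\<lambda>\<psi>. \<Sum>s\<in>{s\<in>S. q s = \<psi>}. \<xi> s)"
  have xv: "\<xi>' (q y) = \<xi> y" if y: "y \<in> Dom" for y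
  proof (cases "y \<in> S")
    case True
    have "{s\<in>S. q s = q y} = {y}"
      using True SD y injD by (auto simp: inj_on_def)
    then show ?thesis by (simp add: \<xi>'_def)
  next
    case False
    have e: "{s\<in>S. q s = q y} = {}"
      using False SD y injD by (auto simp: inj_on_def)
    have "\<xi> y = 0" using False y DomG by (auto simp: S_def spt_def)
    then show ?thesis unfolding \<xi>'_def e by simp
  qed
  have fS: "finite S" using xi by (simp add: S_def)
  have SG: "S \<subseteq> \<Gamma>" by (auto simp: S_def spt_def)
  have sx: "spt \<Gamma>' \<xi>' \<subseteq> q ` S"
  proof
    fix \<psi> assume "\<psi> \<in> spt \<Gamma>' \<xi>'"
    then have "sum \<xi> {s\<in>S. q s = \<psi>} \<noteq> 0" by (simp add: spt_def \<xi>'_def)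
    then have "{s\<in>S. q s = \<psi>} \<noteq> {}" by (metis sum.empty)
    then show "\<psi> \<in> q ` S" by auto
  qed
  have fx: "finite (spt \<Gamma>' \<xi>')" using finite_subset[OF sx] fS by auto
  have injS: "inj_on q S" using inj_on_subset[OF injD SD] .
  have nx: "l2norm \<Gamma>' \<xi>' = l2norm \<Gamma> \<xi>"
  proof -
    have "l2norm \<Gamma>' \<xi>' = L2_set (\<lambda>\<psi>. cmod (\<xi>' \<psi>)) (q ` S)"
      by (rule l2norm_eq) (use sx fS SG in auto)
    also have "\<dots> = L2_set (\<lambda>s. cmod (\<xi>' (q s))) S" by (rule L2_set_reindex[OF injS])
    also have "\<dots> = L2_set (\<lambda>s. cmod (\<xi> s)) S" using xv SD by (intro L2_set_cong) auto
    also have "\<dots> = l2norm \<Gamma> \<xi>" by (rule l2norm_eq[symmetric]) (use fS SG in \<open>auto simp: S_def\<close>)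
    finally show ?thesis .
  qed
  have sF: "spt \<Gamma>' F \<subseteq> q ` B" using F0 by (auto simp: spt_def)
  have qB: "q ` B \<subseteq> \<Gamma>'" using B by auto
  have injB: "inj_on q B" using inj_on_subset[OF injD] by (auto simp: Dom_def)
  have injT: "inj_on q T" using inj_on_subset[OF injD] by (auto simp: Dom_def)
  have cv: "K.conv F \<xi>' (q t) = (\<Sum>b\<in>B. h b * \<xi> (mul (ginv b) t) * \<sigma>' (q b) (q (mul (ginv b) t)))"
    if t: "t \<in> T" for t
  proof -
    have tG: "t \<in> \<Gamma>" using t T by auto
    have "K.conv F \<xi>' (q t) = (\<Sum>\<psi>\<in>q ` B. F \<psi> * \<xi>' (mul' (ginv' \<psi>) (q t)) * \<sigma>' \<psi> (mul' (ginv' \<psi>) (q t)))"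
      by (rule K.conv_alt) (use B sF qB in auto)
    also have "\<dots> = (\<Sum>b\<in>B. h b * \<xi>' (mul' (ginv' (q b)) (q t)) * \<sigma>' (q b) (mul' (ginv' (q b)) (q t)))"
      by (subst sum.reindex[OF injB]) (simp add: F1)
    also have "\<dots> = (\<Sum>b\<in>B. h b * \<xi> (mul (ginv b) t) * \<sigma>' (q b) (q (mul (ginv b) t)))"
    proof (rule sum.cong[OF refl])
      fix b assume b: "b \<in> B"
      have bG: "b \<in> \<Gamma>" using b B by auto
      have md: "mul (ginv b) t \<in> Dom" using b t by (force simp: Dom_def)
      show "h b * \<xi>' (mul' (ginv' (q b)) (q t)) * \<sigma>' (q b) (mul' (ginv' (q b)) (q t)) =
            h b * \<xi> (mul (ginv b) t) * \<sigma>' (q b) (q (mul (ginv b) t))"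
        using xv[OF md] by (simp add: q_div[OF bG tG])
    qed
    finally show ?thesis .
  qed
  have "L2_set (\<lambda>t. cmod (\<Sum>b\<in>B. h b * \<xi> (mul (ginv b) t) * \<sigma>' (q b) (q (mul (ginv b) t)))) T =
        L2_set (\<lambda>t. cmod (K.conv F \<xi>' (q t))) T"
    using cv by (intro L2_set_cong) auto
  also have "\<dots> = L2_set (\<lambda>\<psi>. cmod (K.conv F \<xi>' \<psi>)) (q ` T)" by (rule L2_set_reindex[OF injT, symmetric])
  also have "\<dots> \<le> l2norm \<Gamma>' (K.conv F \<xi>')"
  proof (rule l2_ge_L2set)
    show "finite (spt \<Gamma>' (K.conv F \<xi>'))"
      using K.conv_spt[OF finite_subset[OF sF] fx] B by auto
  qed (use T in auto)
  also have "\<dots> \<le> K.Nm F"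
  proof (rule K.Nm_upper[OF _ fx])
    show "finite (spt \<Gamma>' F)" using finite_subset[OF sF] B by auto
    show "l2norm \<Gamma>' \<xi>' \<le> 1" using nx xi by simp
  qed
  finally show ?thesis .
qed

end


lemma char_0:
  assumes "\<gamma> \<in> characters" shows "\<gamma> 0 = 1"
proof -
  have "\<forall>x y. \<gamma> (x + y) = \<gamma> x * \<gamma> y" using assms by (simp add: characters_def)
  then have "\<gamma> (0 + 0) = \<gamma> 0 * \<gamma> 0" by blast
  then have m: "\<gamma> 0 = \<gamma> 0 * \<gamma> 0" by (simp only: add_0)
  have "cmod (\<gamma> 0) = 1" using assms by (simp add: characters_def)
  then have "\<gamma> 0 \<noteq> 0" by auto
  then show ?thesis by (rule idem_one[OF m])
qed

lemma char_abs: "\<gamma> \<in> characters \<Longrightarrow> cmod (\<gamma> x) = 1"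
  by (auto simp: characters_def)

lemma char_mult: "\<gamma> \<in> characters \<Longrightarrow> \<gamma> (x + y) = \<gamma> x * \<gamma> y"
  by (auto simp: characters_def)

lemma cnj_mult_unit: "cmod z = 1 \<Longrightarrow> cnj z * z = 1"
  using complex_norm_square[of z] by (simp add: mult.commute)

lemma char_cnj_mult: "\<gamma> \<in> characters \<Longrightarrow> cnj (\<gamma> x) * \<gamma> x = 1"
  by (rule cnj_mult_unit) (rule char_abs)

lemma char_neg: "\<gamma> \<in> characters \<Longrightarrow> \<gamma> (- x) = cnj (\<gamma> x)"
proof -
  assume g: "\<gamma> \<in> characters"
  have "\<gamma> (- x) * \<gamma> x = 1" using char_mult[OF g, of "-x" x] char_0[OF g] by simp
  moreover have "cnj (\<gamma> x) * \<gamma> x = 1" using g by (rule char_cnj_mult)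
  ultimately show ?thesis by (rule inv_eq2)
qed

lemma chars_mul: "a \<in> characters \<Longrightarrow> b \<in> characters \<Longrightarrow> (\<lambda>x. a x * b x) \<in> characters"
  unfolding characters_def by (auto intro!: continuous_on_mult simp: norm_mult)

lemma chars_cnj: "a \<in> characters \<Longrightarrow> (\<lambda>x. cnj (a x)) \<in> characters"
  unfolding characters_def by (auto intro!: continuous_on_cnj)

lemma chars_one: "(\<lambda>x. 1) \<in> characters"
  unfolding characters_def by auto

lemma restrict_UNIV: "restrict f UNIV = f" by (rule ext) simp

lemma dual_sub_UNIV: "dual_sub UNIV = characters"
  by (simp add: dual_sub_def q_def restrict_UNIV)

lemma dmul_q: "dmul H (q H a) (q H b) = q H (\<lambda>x. a x * b x)"
  by (rule ext) (simp add: dmul_def q_def)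

lemma dinv_q: "dinv H (q H a) = q H (\<lambda>x. cnj (a x))"
  by (rule ext) (simp add: dinv_def q_def)

lemma q_one: "restrict (\<lambda>x. 1) H = q H (\<lambda>x. 1)" by (simp add: q_def)

lemma dual_subE: "\<psi> \<in> dual_sub H \<Longrightarrow> (\<And>a. a \<in> characters \<Longrightarrow> \<psi> = q H a \<Longrightarrow> P) \<Longrightarrow> P"
  unfolding dual_sub_def by blast

lemma q_in_dual: "a \<in> characters \<Longrightarrow> q H a \<in> dual_sub H"
  unfolding dual_sub_def by blast

lemma abgrp_dual: "abgrp (dual_sub H) (dmul H) (dinv H) (restrict (\<lambda>x. 1) H)"
proof
  fix x y z assume x: "x \<in> dual_sub H" and y: "y \<in> dual_sub H" and z: "z \<in> dual_sub H"
  obtain a where a: "a \<in> characters" "x = q H a" using x by (rule dual_subE)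
  obtain b where b: "b \<in> characters" "y = q H b" using y by (rule dual_subE)
  obtain c where c: "c \<in> characters" "z = q H c" using z by (rule dual_subE)
  show "dmul H x y \<in> dual_sub H" using a b by (simp add: dmul_q q_in_dual chars_mul)
  show "dinv H x \<in> dual_sub H" using a by (simp add: dinv_q q_in_dual chars_cnj)
  show "dmul H (dmul H x y) z = dmul H x (dmul H y z)" using a b c by (simp add: dmul_q mult.assoc)
  show "dmul H x y = dmul H y x" using a b by (simp add: dmul_q mult.commute)
  show "dmul H (restrict (\<lambda>x. 1) H) x = x" using a by (simp add: q_one dmul_q)
  show "dmul H (dinv H x) x = restrict (\<lambda>x. 1) H" using a by (simp add: dinv_q dmul_q q_one char_cnj_mult)
next
  show "restrict (\<lambda>x. 1) H \<in> dual_sub H" by (simp add: q_one q_in_dual chars_one)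
qed

lemma qhom_inst:
  fixes H :: "'g::{topological_space, group_add} set"
  assumes "skew_bichar (dual_sub (UNIV::'g set)) (dmul UNIV) \<sigma>" "skew_bichar (dual_sub H) (dmul H) \<sigma>'"
  shows "qhom (dual_sub UNIV) (dmul UNIV) (dinv UNIV) (restrict (\<lambda>x. 1) UNIV) \<sigma>
              (dual_sub H) (dmul H) (dinv H) (restrict (\<lambda>x. 1) H) \<sigma>' (q H)"
proof -
  have G: "abgrp_sig (dual_sub (UNIV::'g set)) (dmul UNIV) (dinv UNIV) (restrict (\<lambda>x. 1) UNIV) \<sigma>"
    by (rule abgrp_sig.intro[OF abgrp_dual abgrp_sig_axioms.intro[OF assms(1)]])
  have K: "abgrp_sig (dual_sub H) (dmul H) (dinv H) (restrict (\<lambda>x. 1) H) \<sigma>'"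
    by (rule abgrp_sig.intro[OF abgrp_dual abgrp_sig_axioms.intro[OF assms(2)]])
  have Q: "qhom_axioms (dual_sub (UNIV::'g set)) (dmul UNIV) (dual_sub H) (dmul H) (q H)"
  proof (rule qhom_axioms.intro)
    fix x y assume x: "x \<in> dual_sub (UNIV::'g set)" and y: "y \<in> dual_sub (UNIV::'g set)"
    show "q H x \<in> dual_sub H" using x by (simp add: dual_sub_UNIV q_in_dual)
    show "q H (dmul (UNIV::'g set) x y) = dmul H (q H x) (q H y)"
      by (rule ext) (simp add: dmul_def q_def)
  qed
  show ?thesis by (rule qhom.intro[OF G K Q])
qed

lemma theta_vals:
  assumes B: "B \<subseteq> characters" "inj_on (q H) B" and a: "\<And>\<gamma>. a \<gamma> \<noteq> 0 \<Longrightarrow> \<gamma> \<in> B"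
  shows "\<And>b. b \<in> B \<Longrightarrow> theta H a (q H b) = a b"
    and "\<And>\<psi>. \<psi> \<in> dual_sub H \<Longrightarrow> \<psi> \<notin> q H ` B \<Longrightarrow> theta H a \<psi> = 0"
proof -
  have qprod: "q H (\<lambda>x. h x * j x) = q H h" if "j \<in> annihilator H" for h j
    using that by (auto simp: q_def annihilator_def)
  {
    fix \<psi> assume psi: "\<psi> \<in> dual_sub H"
    define h0 where "h0 = (SOME h. h \<in> characters \<and> q H h = \<psi>)"
    have "\<exists>h. h \<in> characters \<and> q H h = \<psi>" using psi by (auto simp: dual_sub_def)
    then have h0: "h0 \<in> characters" "q H h0 = \<psi>" unfolding h0_def by (metis (mono_tags, lifting) someI_ex)+
    have th: "theta H a \<psi> = (\<Sum>j\<in>{j\<in>annihilator H. a (\<lambda>x. h0 x * j x) \<noteq> 0}. a (\<lambda>x. h0 x * j x))"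
      unfolding theta_def h0_def Let_def by simp
    note h0 th
  } note gen = this
  show "theta H a \<psi> = 0" if psi: "\<psi> \<in> dual_sub H" "\<psi> \<notin> q H ` B" for \<psi>
  proof -
    obtain h0 where h0: "h0 \<in> characters" "q H h0 = \<psi>"
      and th: "theta H a \<psi> = (\<Sum>j\<in>{j\<in>annihilator H. a (\<lambda>x. h0 x * j x) \<noteq> 0}. a (\<lambda>x. h0 x * j x))"
      using gen[OF psi(1)] by blast
    have "{j\<in>annihilator H. a (\<lambda>x. h0 x * j x) \<noteq> 0} = {}"
    proof (rule ccontr)
      assume "{j\<in>annihilator H. a (\<lambda>x. h0 x * j x) \<noteq> 0} \<noteq> {}"
      then obtain j where j: "j \<in> annihilator H" "a (\<lambda>x. h0 x * j x) \<noteq> 0" by blast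
      then have "(\<lambda>x. h0 x * j x) \<in> B" using a by blast
      moreover have "q H (\<lambda>x. h0 x * j x) = \<psi>" using qprod[OF j(1)] h0 by simp
      ultimately show False using psi(2) by blast
    qed
    then show ?thesis using th by simp
  qed
  show "theta H a (q H b) = a b" if b: "b \<in> B" for b
  proof -
    have bc: "b \<in> characters" using b B by auto
    obtain h0 where h0: "h0 \<in> characters" "q H h0 = q H b"
      and th: "theta H a (q H b) = (\<Sum>j\<in>{j\<in>annihilator H. a (\<lambda>x. h0 x * j x) \<noteq> 0}. a (\<lambda>x. h0 x * j x))"
      using gen[OF q_in_dual[OF bc]] by blast
    define j0 where "j0 = (\<lambda>x. cnj (h0 x) * b x)"
    have hj0: "(\<lambda>x. h0 x * j0 x) = b"
      by (rule ext) (simp add: j0_def mult.assoc[symmetric] char_cnj_mult[OF h0(1)] mult.commute[of "h0 _"])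
    have j0a: "j0 \<in> annihilator H"
    proof -
      have "j0 \<in> characters" unfolding j0_def by (intro chars_mul chars_cnj h0(1) bc)
      moreover have "j0 x = 1" if "x \<in> H" for x
      proof -
        have "h0 x = b x" using h0(2) that unfolding q_def by (metis restrict_apply')
        then show ?thesis unfolding j0_def using char_cnj_mult[OF bc] by simp
      qed
      ultimately show ?thesis by (auto simp: annihilator_def)
    qed
    have uniq: "j = j0" if j: "j \<in> annihilator H" "a (\<lambda>x. h0 x * j x) \<noteq> 0" for j
    proof -
      have jB: "(\<lambda>x. h0 x * j x) \<in> B" using a j by blast
      have "q H (\<lambda>x. h0 x * j x) = q H b" using qprod[OF j(1)] h0 by simp
      then have e: "(\<lambda>x. h0 x * j x) = b" using B(2) jB b by (auto simp: inj_on_def)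
      show "j = j0"
      proof (rule ext)
        fix x
        have "j x = cnj (h0 x) * (h0 x * j x)" using char_cnj_mult[OF h0(1), of x] by (simp add: mult.assoc[symmetric])
        also have "\<dots> = j0 x" using fun_cong[OF e, of x] by (simp add: j0_def)
        finally show "j x = j0 x" .
      qed
    qed
    show ?thesis
    proof (cases "a b = 0")
      case True
      have "{j\<in>annihilator H. a (\<lambda>x. h0 x * j x) \<noteq> 0} = {}"
        using uniq hj0 True by auto
      then show ?thesis using th True by simp
    next
      case False
      have m: "j0 \<in> {j\<in>annihilator H. a (\<lambda>x. h0 x * j x) \<noteq> 0}" using j0a hj0 False by simp
      have "\<And>j. j \<in> {j\<in>annihilator H. a (\<lambda>x. h0 x * j x) \<noteq> 0} \<Longrightarrow> j = j0" using uniq by blast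
      then have "{j\<in>annihilator H. a (\<lambda>x. h0 x * j x) \<noteq> 0} = {j0}" using m by blast
      then show ?thesis using th hj0 by simp
    qed
  qed
qed


locale mainset =
  fixes l :: "'g::{topological_ab_group_add, t2_space} \<Rightarrow> real"
    and H :: "nat \<Rightarrow> 'g set"
  assumes G_compact: "compact (UNIV :: 'g set)"
    and l_len: "length_fun l" and l_cont: "continuous_on UNIV l"
    and H_sub: "\<forall>n. closed (H n) \<and> is_subgroup (H n)"
    and H_conv: "(\<lambda>n. hausdorff_dist (\<lambda>g g'. l (- g + g')) (H n) UNIV) \<longlonglongrightarrow> 0"
begin

lemma l_nonneg: "l x \<ge> 0" using l_len by (simp add: length_fun_def)
lemma l_zero: "l x = 0 \<longleftrightarrow> x = 0" using l_len by (simp add: length_fun_def)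
lemma l_neg: "l (- x) = l x" using l_len by (simp add: length_fun_def)
lemma l_tri: "l (x + y) \<le> l x + l y" using l_len by (simp add: length_fun_def)
lemma zero_H: "0 \<in> H n" using H_sub by (simp add: is_subgroup_def)

lemma l_to_zero:
  assumes "(\<lambda>n. l (x n)) \<longlonglongrightarrow> 0"
  shows "x \<longlonglongrightarrow> 0"
proof (rule topological_tendstoI)
  fix S :: "'g set" assume S: "open S" "0 \<in> S"
  show "\<forall>\<^sub>F n in sequentially. x n \<in> S"
  proof (cases "- S = {}")
    case True
    then have "S = UNIV" by auto
    then show ?thesis by simp
  next
    case False
    have cK: "compact (- S)" using compact_Int_closed[OF G_compact, of "- S"] S(1) by auto
    have "continuous_on (- S) l" using l_cont continuous_on_subset by blast
    then obtain m where m: "m \<in> - S" "\<forall>y\<in>- S. l m \<le> l y"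
      using continuous_attains_inf[OF cK False] by blast
    have mpos: "l m > 0" using m(1) S(2) l_nonneg[of m] l_zero[of m] by force
    have "\<forall>\<^sub>F n in sequentially. l (x n) < l m" using assms mpos by (rule order_tendstoD(2))
    then show ?thesis by eventually_elim (use m(2) in force)
  qed
qed

abbreviation "hdist n \<equiv> hausdorff_dist (\<lambda>g g'. l (- g + g')) (H n) UNIV"

lemma INF_le_hd: "(INF a\<in>H n. ereal (l (- a + g))) \<le> hdist n"
proof -
  have "(INF a\<in>H n. ereal (l (- a + g))) \<le> (SUP b\<in>UNIV. INF a\<in>H n. ereal (l (- a + b)))"
    by (rule SUP_upper2[of g]) auto
  then show ?thesis unfolding hausdorff_dist_def by (rule order_trans) simp
qed

lemma hd_nonneg: "hdist n \<ge> 0"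
proof -
  have "0 \<le> (INF a\<in>H n. ereal (l (- a + g)))" for g by (rule INF_greatest) (simp add: l_nonneg)
  then show ?thesis using INF_le_hd[where n=n and g=0] by (rule order_trans)
qed

lemma approx_seq: "\<exists>a. (\<forall>n. a n \<in> H n) \<and> (\<lambda>n. l (- a n + g)) \<longlonglongrightarrow> 0"
proof -
  have ex: "\<exists>a. a \<in> H n \<and> (hdist n \<noteq> \<infinity> \<longrightarrow> ereal (l (- a + g)) < hdist n + ereal (1 / Suc n))" for n
  proof (cases "hdist n = \<infinity>")
    case True then show ?thesis using zero_H by blast
  next
    case False
    then obtain r where r: "hdist n = ereal r" using hd_nonneg[of n] by (cases "hdist n") auto
    have "(INF a\<in>H n. ereal (l (- a + g))) < ereal (r + 1 / Suc n)"
    proof (rule order_le_less_trans[OF INF_le_hd[where n=n and g=g]])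
      show "hdist n < ereal (r + 1 / real (Suc n))" using r by simp
    qed
    then obtain a where "a \<in> H n" "ereal (l (- a + g)) < ereal (r + 1 / Suc n)"
      by (auto simp: INF_less_iff)
    then show ?thesis using r by (intro exI[of _ a]) simp
  qed
  then obtain a where a: "\<And>n. a n \<in> H n" "\<And>n. hdist n \<noteq> \<infinity> \<Longrightarrow> ereal (l (- a n + g)) < hdist n + ereal (1 / Suc n)"
    by metis
  have "(\<lambda>n. l (- a n + g)) \<longlonglongrightarrow> 0"
  proof (rule order_tendstoI)
    fix y :: real assume y: "y < 0"
    have "y < l (- a n + g)" for n using l_nonneg[of "- a n + g"] y by linarith
    then show "\<forall>\<^sub>F n in sequentially. y < l (- a n + g)" by simp
  next
    fix \<epsilon> :: real assume e: "0 < \<epsilon>"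
    have ev1: "\<forall>\<^sub>F n in sequentially. hdist n < ereal (\<epsilon> / 2)"
      using H_conv by (rule order_tendstoD(2)) (use e in simp)
    have ev2: "\<forall>\<^sub>F n in sequentially. 1 / real (Suc n) < \<epsilon> / 2"
    proof -
      obtain k :: nat where k: "2 / \<epsilon> < real k" using reals_Archimedean2 by blast
      have "1 / real (Suc n) < \<epsilon> / 2" if "n \<ge> k" for n
      proof -
        have "2 / \<epsilon> < real (Suc n)" using k that by simp
        then show ?thesis using e by (simp add: field_simps)
      qed
      then show ?thesis by (auto simp: eventually_sequentially)
    qed
    show "\<forall>\<^sub>F n in sequentially. l (- a n + g) < \<epsilon>"
      using ev1 ev2
    proof eventually_elim
      case (elim n)
      then obtain r where r: "hdist n = ereal r" "r < \<epsilon> / 2" using hd_nonneg[of n] by (cases "hdist n") auto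
      then have "ereal (l (- a n + g)) < ereal (r + 1 / Suc n)" using a(2)[of n] by simp
      then show ?case using r elim by simp
    qed
  qed
  then show ?thesis using a(1) by blast
qed

lemma char_tendsto:
  assumes b: "b \<in> characters" and lim: "(\<lambda>n. l (- a n + g)) \<longlonglongrightarrow> 0"
  shows "(\<lambda>n. b (a n)) \<longlonglongrightarrow> b g"
proof -
  have x0: "(\<lambda>n. - a n + g) \<longlonglongrightarrow> 0" using lim by (rule l_to_zero)
  have "(\<lambda>n. - (- a n + g)) \<longlonglongrightarrow> - 0" using x0 by (rule tendsto_minus)
  then have x1: "(\<lambda>n. - (- a n + g)) \<longlonglongrightarrow> 0" by simp
  have cb: "isCont b 0" using b by (auto simp: characters_def continuous_on_eq_continuous_at)
  have "(\<lambda>n. b (- (- a n + g))) \<longlonglongrightarrow> b 0" using isCont_tendsto_compose[OF cb x1] .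
  then have "(\<lambda>n. b (- (- a n + g)) * b g) \<longlonglongrightarrow> b 0 * b g" by (rule tendsto_mult) simp
  moreover have "b (- (- a n + g)) * b g = b (a n)" for n
    using char_mult[OF b, of "- (- a n + g)" g] by (simp add: algebra_simps)
  ultimately show ?thesis using char_0[OF b] by simp
qed

lemma l_tendsto:
  assumes lim: "(\<lambda>n. l (- a n + g)) \<longlonglongrightarrow> 0"
  shows "(\<lambda>n. l (a n)) \<longlonglongrightarrow> l g"
proof -
  have "((\<lambda>n. l (a n) - l g) \<longlonglongrightarrow> 0)"
  proof (rule Lim_null_comparison[OF _ lim])
    show "\<forall>\<^sub>F n in sequentially. norm (l (a n) - l g) \<le> l (- a n + g)"
    proof (rule always_eventually, rule allI)
      fix n
      have 1: "l g \<le> l (a n) + l (- a n + g)" using l_tri[of "a n" "- a n + g"] by (simp add: algebra_simps)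
      have 2: "l (a n) \<le> l g + l (- a n + g)"
        using l_tri[of g "- (- a n + g)"] l_neg[of "- a n + g"] by (simp add: algebra_simps)
      show "norm (l (a n) - l g) \<le> l (- a n + g)" using 1 2 by simp
    qed
  qed
  then show ?thesis by (rule LIM_zero_cancel)
qed

lemma ev_inj:
  assumes K: "finite K" "K \<subseteq> characters"
  shows "\<forall>\<^sub>F n in sequentially. inj_on (q (H n)) K"
proof -
  have "\<forall>\<^sub>F n in sequentially. \<forall>p\<in>K \<times> K. fst p \<noteq> snd p \<longrightarrow> q (H n) (fst p) \<noteq> q (H n) (snd p)"
  proof (rule eventually_ball_finite)
    show "finite (K \<times> K)" using K by simp
    show "\<forall>p\<in>K \<times> K. \<forall>\<^sub>F n in sequentially. fst p \<noteq> snd p \<longrightarrow> q (H n) (fst p) \<noteq> q (H n) (snd p)"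
    proof
      fix p assume p: "p \<in> K \<times> K"
      obtain x y where xy: "p = (x, y)" "x \<in> characters" "y \<in> characters" using p K by auto
      show "\<forall>\<^sub>F n in sequentially. fst p \<noteq> snd p \<longrightarrow> q (H n) (fst p) \<noteq> q (H n) (snd p)"
      proof (cases "x = y")
        case True then show ?thesis using xy by simp
      next
        case False
        define chr where "chr = (\<lambda>z. cnj (x z) * y z)"
        have chi: "chr \<in> characters" unfolding chr_def by (intro chars_mul chars_cnj xy)
        have "\<exists>g. chr g \<noteq> 1"
        proof (rule ccontr)
          assume "\<not> (\<exists>g. chr g \<noteq> 1)"
          then have "\<forall>g. chr g = 1" by blast
          have "y z = x z" for z
          proof -
            have "y z = (x z * cnj (x z)) * y z" using char_cnj_mult[OF xy(2), of z] by (simp add: mult.commute)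
            also have "\<dots> = x z * chr z" by (simp add: chr_def mult.assoc)
            finally show ?thesis using \<open>\<forall>g. chr g = 1\<close> by simp
          qed
          then show False using False by auto
        qed
        then obtain g where g: "chr g \<noteq> 1" by blast
        obtain a where a: "\<And>n. a n \<in> H n" "(\<lambda>n. l (- a n + g)) \<longlonglongrightarrow> 0" using approx_seq by blast
        have "(\<lambda>n. chr (a n)) \<longlonglongrightarrow> chr g" using char_tendsto[OF chi a(2)] .
        then have "\<forall>\<^sub>F n in sequentially. chr (a n) \<noteq> 1" using g by (rule tendsto_imp_eventually_ne)
        then show ?thesis
        proof eventually_elim
          case (elim n)
          show ?case
          proof (intro impI notI)
            assume "q (H n) (fst p) = q (H n) (snd p)"
            then have "x (a n) = y (a n)" using xy(1) a(1)[of n] unfolding q_def by (metis fst_conv snd_conv restrict_apply')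
            then have "chr (a n) = 1" using char_cnj_mult[OF xy(2), of "a n"] by (simp add: chr_def)
            then show False using elim by simp
          qed
        qed
      qed
    qed
  qed
  then show ?thesis
    by eventually_elim (auto simp: inj_on_def)
qed

end


locale mainset2 = mainset l H
  for l :: "'g::{topological_ab_group_add, t2_space} \<Rightarrow> real" and H +
  fixes \<sigma> :: "nat \<Rightarrow> ('g \<Rightarrow> complex) \<Rightarrow> ('g \<Rightarrow> complex) \<Rightarrow> complex"
    and \<sigma>_inf :: "('g \<Rightarrow> complex) \<Rightarrow> ('g \<Rightarrow> complex) \<Rightarrow> complex"
    and B :: "('g \<Rightarrow> complex) set" and N :: nat
  assumes sig: "\<forall>n. skew_bichar (dual_sub (H n)) (dmul (H n)) (\<sigma> n)"
    and sig_inf: "skew_bichar (dual_sub UNIV) (dmul UNIV) \<sigma>_inf"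
    and sig_conv: "\<forall>\<gamma>\<in>characters. \<forall>\<psi>\<in>characters.
                     (\<lambda>n. \<sigma> n (q (H n) \<gamma>) (q (H n) \<psi>)) \<longlonglongrightarrow> \<sigma>_inf \<gamma> \<psi>"
    and B_fin: "finite B" and B_chars: "B \<subseteq> characters"
    and N_inj: "\<forall>n\<ge>N. inj_on (q (H n)) B"
begin

abbreviation "GG \<equiv> dual_sub (UNIV::'g set)"
abbreviation "mulG \<equiv> dmul (UNIV::'g set)"
abbreviation "invG \<equiv> dinv (UNIV::'g set)"
abbreviation "eG \<equiv> restrict (\<lambda>x::'g. 1::complex) UNIV"

definition "Ni f = normH (UNIV::'g set) \<sigma>_inf f"
definition "Nn n f = normH (H n) (\<sigma> n) (theta (H n) f)"

lemma Gsig: "abgrp_sig GG mulG invG eG \<sigma>_inf"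
  by (rule abgrp_sig.intro[OF abgrp_dual abgrp_sig_axioms.intro[OF sig_inf]])

lemma Qn: "qhom GG mulG invG eG \<sigma>_inf (dual_sub (H n)) (dmul (H n)) (dinv (H n)) (restrict (\<lambda>x. 1) (H n)) (\<sigma> n) (q (H n))"
  by (rule qhom_inst[OF sig_inf sig[rule_format]])

lemma GG_eq: "GG = characters" by (rule dual_sub_UNIV)

lemma B_GG: "B \<subseteq> GG" using B_chars GG_eq by simp

lemma Ni_def': "Ni f = cstar_norm GG mulG invG \<sigma>_inf f" by (simp add: Ni_def normH_def)

lemma fsB: "(\<And>\<gamma>. f \<gamma> \<noteq> 0 \<Longrightarrow> \<gamma> \<in> B) \<Longrightarrow> finite (spt GG f)"
  by (rule finite_subset[OF _ B_fin]) (auto simp: spt_def)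

lemma sumB_le:
  assumes f: "\<And>\<gamma>. f \<gamma> \<noteq> 0 \<Longrightarrow> \<gamma> \<in> B"
  shows "(\<Sum>b\<in>B. cmod (f b)) \<le> real (card B) * Ni f"
proof -
  interpret G: abgrp_sig GG mulG invG eG \<sigma>_inf by (rule Gsig)
  have l2: "l2norm GG f \<le> Ni f" unfolding Ni_def' by (rule G.Nm_ge_l2[OF fsB[OF f]])
  have "cmod (f b) \<le> l2norm GG f" if b: "b \<in> B" for b
  proof -
    have "l2norm GG f = L2_set (\<lambda>x. cmod (f x)) B"
      by (rule l2norm_eq) (use B_fin B_GG f in \<open>auto simp: spt_def\<close>)
    then show ?thesis using member_le_L2_set[OF B_fin b] by simp
  qed
  then have "(\<Sum>b\<in>B. cmod (f b)) \<le> (\<Sum>b\<in>B. Ni f)" using l2 by (intro sum_mono) (blast intro: order_trans)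
  then show ?thesis by simp
qed

lemma theta_F:
  assumes n: "n \<ge> N" and f: "\<And>\<gamma>. f \<gamma> \<noteq> 0 \<Longrightarrow> \<gamma> \<in> B"
  shows "\<And>b. b \<in> B \<Longrightarrow> theta (H n) f (q (H n) b) = f b"
    and "\<And>\<psi>. \<psi> \<in> dual_sub (H n) \<Longrightarrow> \<psi> \<notin> q (H n) ` B \<Longrightarrow> theta (H n) f \<psi> = 0"
  using theta_vals[OF B_chars N_inj[rule_format, OF n] f] by blast+

lemma unif_upper:
  assumes e: "\<epsilon> > 0"
  shows "\<forall>\<^sub>F n in sequentially. \<forall>f. (\<forall>\<gamma>. f \<gamma> \<noteq> 0 \<longrightarrow> \<gamma> \<in> B) \<longrightarrow> Nn n f \<le> Ni f + \<epsilon> * (\<Sum>b\<in>B. cmod (f b))"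
proof -
  interpret G: abgrp_sig GG mulG invG eG \<sigma>_inf by (rule Gsig)
  obtain \<eta> where eta: "finite (spt GG \<eta>)" "l2norm GG \<eta> = 1"
    "\<forall>b'\<in>invG ` B. l2norm GG (\<lambda>x. \<eta> (mulG b' x) - \<eta> x) \<le> \<epsilon> / 2"
  proof -
    have "invG ` B \<subseteq> GG" using B_GG G.inv_cl by blast
    then show ?thesis using G.folner_l2[of "invG ` B" "\<epsilon> / 2"] B_fin e that by auto
  qed
  have err1: "l2norm GG (\<lambda>x. \<eta> (mulG (invG b) x) - \<eta> x) \<le> \<epsilon> / 2" if "b \<in> B" for b
    using eta(3) that by blast
  have spe: "spt GG \<eta> \<subseteq> characters" using GG_eq by (auto simp: spt_def)
  have lim2: "(\<lambda>n. l2norm GG (\<lambda>x. \<eta> x * (\<sigma>_inf b x - \<sigma> n (q (H n) b) (q (H n) x)))) \<longlonglongrightarrow> 0"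
    if b: "b \<in> B" for b
  proof -
    have bc: "b \<in> characters" using b B_chars by auto
    have eq: "l2norm GG (\<lambda>x. \<eta> x * (\<sigma>_inf b x - \<sigma> n (q (H n) b) (q (H n) x))) =
       sqrt (\<Sum>x\<in>spt GG \<eta>. (cmod (\<eta> x * (\<sigma>_inf b x - \<sigma> n (q (H n) b) (q (H n) x))))\<^sup>2)" for n
      unfolding L2_set_def[symmetric]
      by (rule l2norm_eq) (use eta(1) in \<open>auto simp: spt_def\<close>)
    have "(\<lambda>n. sqrt (\<Sum>x\<in>spt GG \<eta>. (cmod (\<eta> x * (\<sigma>_inf b x - \<sigma> n (q (H n) b) (q (H n) x))))\<^sup>2))
          \<longlonglongrightarrow> sqrt (\<Sum>x\<in>spt GG \<eta>. (cmod (\<eta> x * (\<sigma>_inf b x - \<sigma>_inf b x)))\<^sup>2)"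
    proof (intro tendsto_real_sqrt tendsto_sum tendsto_power tendsto_norm tendsto_mult tendsto_diff tendsto_const)
      fix x assume "x \<in> spt GG \<eta>"
      then have "x \<in> characters" using spe by auto
      then show "(\<lambda>n. \<sigma> n (q (H n) b) (q (H n) x)) \<longlonglongrightarrow> \<sigma>_inf b x" using sig_conv bc by blast
    qed
    then show ?thesis unfolding eq by simp
  qed
  have ev2: "\<forall>\<^sub>F n in sequentially. \<forall>b\<in>B. l2norm GG (\<lambda>x. \<eta> x * (\<sigma>_inf b x - \<sigma> n (q (H n) b) (q (H n) x))) < \<epsilon> / 2"
  proof (rule eventually_ball_finite[OF B_fin], rule ballI)
    fix b assume b: "b \<in> B"
    show "\<forall>\<^sub>F n in sequentially. l2norm GG (\<lambda>x. \<eta> x * (\<sigma>_inf b x - \<sigma> n (q (H n) b) (q (H n) x))) < \<epsilon> / 2"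
      using lim2[OF b] by (rule order_tendstoD(2)) (use e in simp)
  qed
  have evN: "\<forall>\<^sub>F n in sequentially. n \<ge> N" by (rule eventually_ge_at_top)
  show ?thesis using ev2 evN
  proof eventually_elim
    case (elim n)
    show ?case
    proof (intro allI impI)
      fix f :: "('g \<Rightarrow> complex) \<Rightarrow> complex" assume f: "\<forall>\<gamma>. f \<gamma> \<noteq> 0 \<longrightarrow> \<gamma> \<in> B"
      interpret Q: qhom GG mulG invG eG \<sigma>_inf "dual_sub (H n)" "dmul (H n)" "dinv (H n)" "restrict (\<lambda>x. 1) (H n)" "\<sigma> n" "q (H n)"
        by (rule Qn)
      have injn: "inj_on (q (H n)) B" using N_inj elim by auto
      have "Nn n f \<le> Ni f + (\<Sum>b\<in>B. cmod (f b) *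
          (l2norm GG (\<lambda>x. \<eta> (mulG (invG b) x) - \<eta> x) + l2norm GG (\<lambda>x. \<eta> x * (\<sigma>_inf b x - \<sigma> n (q (H n) b) (q (H n) x)))))"
        unfolding Nn_def Ni_def' normH_def
      proof (rule Q.upper[OF B_fin B_GG injn _ _ _ eta(1,2)])
        show "\<And>x. x \<in> GG \<Longrightarrow> f x \<noteq> 0 \<Longrightarrow> x \<in> B" using f by blast
        show "\<And>b. b \<in> B \<Longrightarrow> theta (H n) f (q (H n) b) = f b" using theta_F(1)[OF elim(2)] f by blast
        show "\<And>\<psi>. \<psi> \<in> dual_sub (H n) \<Longrightarrow> \<psi> \<notin> q (H n) ` B \<Longrightarrow> theta (H n) f \<psi> = 0"
          using theta_F(2)[OF elim(2)] f by blast
      qed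
      also have "\<dots> \<le> Ni f + (\<Sum>b\<in>B. cmod (f b) * \<epsilon>)"
      proof (intro add_left_mono sum_mono mult_left_mono)
        fix b assume b: "b \<in> B"
        show "l2norm GG (\<lambda>x. \<eta> (mulG (invG b) x) - \<eta> x) + l2norm GG (\<lambda>x. \<eta> x * (\<sigma>_inf b x - \<sigma> n (q (H n) b) (q (H n) x))) \<le> \<epsilon>"
          using err1[OF b] elim(1) b by fastforce
      qed simp
      also have "\<dots> = Ni f + \<epsilon> * (\<Sum>b\<in>B. cmod (f b))" by (simp add: sum_distrib_left mult.commute)
      finally show "Nn n f \<le> Ni f + \<epsilon> * (\<Sum>b\<in>B. cmod (f b))" .
    qed
  qed
qed

lemma lower_lim:
  assumes f: "\<And>\<gamma>. f \<gamma> \<noteq> 0 \<Longrightarrow> \<gamma> \<in> B"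
  and fn: "\<And>n \<gamma>. fn n \<gamma> \<noteq> 0 \<Longrightarrow> \<gamma> \<in> B"
  and conv: "\<And>b. b \<in> B \<Longrightarrow> (\<lambda>n. fn n b) \<longlonglongrightarrow> f b"
  and e: "\<epsilon> > 0"
  shows "\<forall>\<^sub>F n in sequentially. Ni f - \<epsilon> < Nn n (fn n)"
proof -
  interpret G: abgrp_sig GG mulG invG eG \<sigma>_inf by (rule Gsig)
  have ff: "finite (spt GG f)" by (rule fsB[OF f])
  obtain \<xi> where xi: "finite (spt GG \<xi>)" "l2norm GG \<xi> \<le> 1" "Ni f - \<epsilon> / 2 < l2norm GG (G.conv f \<xi>)"
    using G.Nm_approx[OF ff, of "\<epsilon> / 2"] e unfolding Ni_def' by auto
  define T where "T = spt GG (G.conv f \<xi>)"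
  have fT: "finite T" unfolding T_def by (rule G.conv_spt[OF ff xi(1)])
  have TG: "T \<subseteq> GG" by (auto simp: T_def spt_def)
  define K0 where "K0 = B \<union> T \<union> spt GG \<xi> \<union> (\<lambda>(b, t). mulG (invG b) t) ` (B \<times> T)"
  have fK0: "finite K0" using fT B_fin xi(1) by (simp add: K0_def)
  have K0c: "K0 \<subseteq> characters"
  proof -
    have "K0 \<subseteq> GG" using B_GG TG by (auto simp: K0_def spt_def intro!: G.mul_cl G.inv_cl)
    then show ?thesis using GG_eq by simp
  qed
  define \<Phi> where "\<Phi> = (\<lambda>n. L2_set (\<lambda>t. cmod (\<Sum>b\<in>B. fn n b * \<xi> (mulG (invG b) t) * \<sigma> n (q (H n) b) (q (H n) (mulG (invG b) t)))) T)"
  have lim: "\<Phi> \<longlonglongrightarrow> L2_set (\<lambda>t. cmod (\<Sum>b\<in>B. f b * \<xi> (mulG (invG b) t) * \<sigma>_inf b (mulG (invG b) t))) T"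
    unfolding \<Phi>_def L2_set_def
  proof (intro tendsto_real_sqrt tendsto_sum tendsto_power tendsto_norm tendsto_mult tendsto_const)
    fix t b assume t: "t \<in> T" and b: "b \<in> B"
    show "(\<lambda>n. fn n b) \<longlonglongrightarrow> f b" using conv[OF b] .
    have bc: "b \<in> characters" using b B_chars by auto
    have "mulG (invG b) t \<in> characters" using t TG b B_GG GG_eq G.mul_cl G.inv_cl by blast
    then show "(\<lambda>n. \<sigma> n (q (H n) b) (q (H n) (mulG (invG b) t))) \<longlonglongrightarrow> \<sigma>_inf b (mulG (invG b) t)"
      using sig_conv bc by blast
  qed
  have eqL: "L2_set (\<lambda>t. cmod (\<Sum>b\<in>B. f b * \<xi> (mulG (invG b) t) * \<sigma>_inf b (mulG (invG b) t))) T = l2norm GG (G.conv f \<xi>)"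
  proof -
    have "l2norm GG (G.conv f \<xi>) = L2_set (\<lambda>t. cmod (G.conv f \<xi> t)) T"
      by (rule l2norm_eq) (use fT TG in \<open>auto simp: T_def\<close>)
    also have "\<dots> = L2_set (\<lambda>t. cmod (\<Sum>b\<in>B. f b * \<xi> (mulG (invG b) t) * \<sigma>_inf b (mulG (invG b) t))) T"
    proof (rule L2_set_cong[OF refl])
      fix t assume "t \<in> T"
      show "cmod (G.conv f \<xi> t) = cmod (\<Sum>b\<in>B. f b * \<xi> (mulG (invG b) t) * \<sigma>_inf b (mulG (invG b) t))"
        by (subst G.conv_alt[OF B_fin _ B_GG]) (use f in \<open>auto simp: spt_def\<close>)
    qed
    finally show ?thesis by simp
  qed
  have ev1: "\<forall>\<^sub>F n in sequentially. Ni f - \<epsilon> < \<Phi> n"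
    using lim by (rule order_tendstoD(1)) (use xi(3) eqL e in linarith)
  have ev2: "\<forall>\<^sub>F n in sequentially. inj_on (q (H n)) K0" by (rule ev_inj[OF fK0 K0c])
  have evN: "\<forall>\<^sub>F n in sequentially. n \<ge> N" by (rule eventually_ge_at_top)
  show ?thesis using ev1 ev2 evN
  proof eventually_elim
    case (elim n)
    interpret Q: qhom GG mulG invG eG \<sigma>_inf "dual_sub (H n)" "dmul (H n)" "dinv (H n)" "restrict (\<lambda>x. 1) (H n)" "\<sigma> n" "q (H n)"
      by (rule Qn)
    have "\<Phi> n \<le> Nn n (fn n)"
      unfolding \<Phi>_def Nn_def normH_def
    proof (rule Q.lower[OF B_fin B_GG _ _ _ xi(1,2) fT TG])
      show "\<And>x. x \<in> GG \<Longrightarrow> fn n x \<noteq> 0 \<Longrightarrow> x \<in> B" using fn by blast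
      show "\<And>b. b \<in> B \<Longrightarrow> theta (H n) (fn n) (q (H n) b) = fn n b" using theta_F(1)[OF elim(3)] fn by blast
      show "\<And>\<psi>. \<psi> \<in> dual_sub (H n) \<Longrightarrow> \<psi> \<notin> q (H n) ` B \<Longrightarrow> theta (H n) (fn n) \<psi> = 0"
        using theta_F(2)[OF elim(3)] fn by blast
      show "inj_on (q (H n)) (B \<union> T \<union> spt GG \<xi> \<union> (\<lambda>(b, t). mulG (invG b) t) ` (B \<times> T))"
        using elim(2) by (simp add: K0_def)
    qed
    then show ?case using elim(1) by simp
  qed
qed

end


context mainset2 begin

definition "ag a g = (\<lambda>\<gamma>. (1 - \<gamma> g) * a \<gamma>)"

lemma ag_supp: "(\<And>\<gamma>. a \<gamma> \<noteq> 0 \<Longrightarrow> \<gamma> \<in> B) \<Longrightarrow> ag a g \<gamma> \<noteq> 0 \<Longrightarrow> \<gamma> \<in> B"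
  by (auto simp: ag_def)

lemma Ni_nonneg: "(\<And>\<gamma>. f \<gamma> \<noteq> 0 \<Longrightarrow> \<gamma> \<in> B) \<Longrightarrow> Ni f \<ge> 0"
proof -
  interpret G: abgrp_sig GG mulG invG eG \<sigma>_inf by (rule Gsig)
  assume f: "\<And>\<gamma>. f \<gamma> \<noteq> 0 \<Longrightarrow> \<gamma> \<in> B"
  show ?thesis unfolding Ni_def' by (rule G.Nm_nonneg[OF fsB[OF f]])
qed

lemma LipL_n:
  assumes n: "n \<ge> N" and a: "\<And>\<gamma>. a \<gamma> \<noteq> 0 \<Longrightarrow> \<gamma> \<in> B"
  shows "LipL l (H n) (\<sigma> n) (theta (H n) a) = (SUP g\<in>H n - {0}. ereal (Nn n (ag a g) / l g))"
  unfolding LipL_def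
proof (rule SUP_cong[OF refl])
  fix g assume g: "g \<in> H n - {0}"
  interpret Q: qhom GG mulG invG eG \<sigma>_inf "dual_sub (H n)" "dmul (H n)" "dinv (H n)" "restrict (\<lambda>x. 1) (H n)" "\<sigma> n" "q (H n)"
    by (rule Qn)
  have agB: "\<And>\<gamma>. ag a g \<gamma> \<noteq> 0 \<Longrightarrow> \<gamma> \<in> B" using a by (rule ag_supp)
  have "normH (H n) (\<sigma> n) (\<lambda>\<psi>. theta (H n) a \<psi> - dual_action g (theta (H n) a) \<psi>) = Nn n (ag a g)"
    unfolding Nn_def normH_def
  proof (rule Q.K.Nm_cong)
    fix \<psi> assume psi: "\<psi> \<in> dual_sub (H n)"
    show "theta (H n) a \<psi> - dual_action g (theta (H n) a) \<psi> = theta (H n) (ag a g) \<psi>"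
    proof (cases "\<psi> \<in> q (H n) ` B")
      case True
      then obtain b where b: "b \<in> B" "\<psi> = q (H n) b" by blast
      have "\<psi> g = b g" using b(2) g by (simp add: q_def)
      then show ?thesis using b theta_F(1)[where f=a, OF n a b(1)] theta_F(1)[where f="ag a g", OF n agB b(1)]
        by (simp add: dual_action_def ag_def algebra_simps)
    next
      case False
      then show ?thesis using theta_F(2)[where f=a, OF n a psi] theta_F(2)[where f="ag a g", OF n agB psi]
        by (simp add: dual_action_def)
    qed
  qed
  then show "ereal (normH (H n) (\<sigma> n) (\<lambda>\<psi>. theta (H n) a \<psi> - dual_action g (theta (H n) a) \<psi>) / l g) =
             ereal (Nn n (ag a g) / l g)" by simp
qed

lemma LipL_inf:
  "LipL l UNIV \<sigma>_inf a = (SUP g\<in>UNIV - {0}. ereal (Ni (ag a g) / l g))"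
  unfolding LipL_def Ni_def
proof (rule SUP_cong[OF refl])
  fix g :: 'g
  have "(\<lambda>\<psi>. a \<psi> - dual_action g a \<psi>) = ag a g"
    by (rule ext) (simp add: dual_action_def ag_def algebra_simps)
  then show "ereal (normH UNIV \<sigma>_inf (\<lambda>\<psi>. a \<psi> - dual_action g a \<psi>) / l g) = ereal (normH UNIV \<sigma>_inf (ag a g) / l g)"
    by simp
qed

lemma conv_main:
  assumes a: "\<And>\<gamma>. a \<gamma> \<noteq> 0 \<Longrightarrow> \<gamma> \<in> B"
  shows "(\<lambda>n. SUP g\<in>H n - {0}. ereal (Nn n (ag a g) / l g)) \<longlonglongrightarrow> (SUP g\<in>UNIV - {0}. ereal (Ni (ag a g) / l g))"
    (is "?Ln \<longlonglongrightarrow> ?L")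
proof (rule order_tendstoI)
  fix y assume y: "y < ?L"
  then obtain g where g: "g \<in> UNIV - {0}" "y < ereal (Ni (ag a g) / l g)" by (auto simp: less_SUP_iff)
  define r where "r = Ni (ag a g) / l g"
  obtain z where z: "y < ereal z" "ereal z < ereal r" using ereal_dense2[OF g(2)[folded r_def]] by blast
  have lg: "l g > 0" using g(1) l_nonneg[of g] l_zero[of g] by force
  obtain an where an: "\<And>n. an n \<in> H n" "(\<lambda>n. l (- an n + g)) \<longlonglongrightarrow> 0" using approx_seq by blast
  define \<epsilon> where "\<epsilon> = (r - z) * l g / 2"
  have e: "\<epsilon> > 0" using z(2) lg by (simp add: \<epsilon>_def)
  have agB: "\<And>g \<gamma>. ag a g \<gamma> \<noteq> 0 \<Longrightarrow> \<gamma> \<in> B" using a by (rule ag_supp)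
  have cv: "(\<lambda>n. ag a (an n) b) \<longlonglongrightarrow> ag a g b" if b: "b \<in> B" for b
  proof -
    have bc: "b \<in> characters" using b B_chars by auto
    show ?thesis unfolding ag_def
      by (intro tendsto_mult tendsto_diff tendsto_const char_tendsto[OF bc an(2)])
  qed
  have ev1: "\<forall>\<^sub>F n in sequentially. Ni (ag a g) - \<epsilon> < Nn n (ag a (an n))"
    by (rule lower_lim[OF agB agB cv e])
  have ll: "(\<lambda>n. l (an n)) \<longlonglongrightarrow> l g" by (rule l_tendsto[OF an(2)])
  have ev2: "\<forall>\<^sub>F n in sequentially. l (an n) > 0" using ll lg by (rule order_tendstoD(1))
  have "(\<lambda>n. (Ni (ag a g) - \<epsilon>) / l (an n)) \<longlonglongrightarrow> (Ni (ag a g) - \<epsilon>) / l g"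
    using lg by (intro tendsto_divide tendsto_const ll) simp
  moreover have "(Ni (ag a g) - \<epsilon>) / l g > z"
  proof -
    have "(Ni (ag a g) - \<epsilon>) / l g = r - (r - z) / 2" using lg by (simp add: r_def \<epsilon>_def field_simps)
    moreover have "z < r" using z(2) by simp
    then have "z < r - (r - z) / 2" by (simp add: field_simps)
    ultimately show ?thesis by simp
  qed
  ultimately have ev3: "\<forall>\<^sub>F n in sequentially. z < (Ni (ag a g) - \<epsilon>) / l (an n)" by (rule order_tendstoD(1))
  show "\<forall>\<^sub>F n in sequentially. y < ?Ln n" using ev1 ev2 ev3
  proof eventually_elim
    case (elim n)
    have ne: "an n \<in> H n - {0}" using elim(2) an(1)[of n] l_zero[of "an n"] by auto
    have "z < (Ni (ag a g) - \<epsilon>) / l (an n)" using elim(3) .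
    also have "\<dots> < Nn n (ag a (an n)) / l (an n)" using elim(1,2) by (rule divide_strict_right_mono)
    finally have "ereal z < ereal (Nn n (ag a (an n)) / l (an n))" by simp
    also have "\<dots> \<le> ?Ln n" by (rule SUP_upper[OF ne])
    finally show ?case using z(1) by simp
  qed
next
  fix y assume y: "?L < y"
  show "\<forall>\<^sub>F n in sequentially. ?Ln n < y"
  proof (cases "UNIV - {0::'g} = {}")
    case True
    then have "\<And>n. H n - {0} = {}" by blast
    have L: "?L = -\<infinity>" by (simp only: True SUP_empty bot_ereal_def)
    have "?Ln n = -\<infinity>" for n by (simp only: \<open>\<And>n. H n - {0} = {}\<close> SUP_empty bot_ereal_def)
    then show ?thesis using y L by simp
  next
    case False
    then obtain g0 :: 'g where g0: "g0 \<noteq> 0" by auto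
    have agB: "\<And>g \<gamma>. ag a g \<gamma> \<noteq> 0 \<Longrightarrow> \<gamma> \<in> B" using a by (rule ag_supp)
    have rat_nn: "Ni (ag a g) / l g \<ge> 0" for g
      using Ni_nonneg[OF agB[of g]] l_nonneg[of g] by simp
    have "ereal (Ni (ag a g0) / l g0) \<le> ?L" by (rule SUP_upper) (use g0 in simp)
    then have Lge: "?L \<ge> 0" using rat_nn[of g0] by (meson ereal_less_eq(5) order_trans)
    then obtain M where M: "?L = ereal M" using y by (cases ?L) auto
    have M0: "M \<ge> 0" using Lge M by simp
    have ratM: "Ni (ag a g) / l g \<le> M" if "g \<noteq> 0" for g
    proof -
      have "ereal (Ni (ag a g) / l g) \<le> ?L" by (rule SUP_upper) (use that in simp)
      then show ?thesis using M by simp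
    qed
    obtain z where z: "ereal M < ereal z" "ereal z < y" using ereal_dense2 y M by metis
    define \<delta> where "\<delta> = (z - M) / (M + 1)"
    have d: "\<delta> > 0" using z M0 by (simp add: \<delta>_def)
    define \<epsilon> where "\<epsilon> = \<delta> / (real (card B) + 1)"
    have e: "\<epsilon> > 0" using d by (simp add: \<epsilon>_def)
    have ecB: "\<epsilon> * real (card B) \<le> \<delta>"
    proof -
      have "\<epsilon> * real (card B) = \<delta> * (real (card B) / (real (card B) + 1))" by (simp add: \<epsilon>_def)
      also have "\<dots> \<le> \<delta> * 1" using d by (intro mult_left_mono) simp_all
      finally show ?thesis by simp
    qed
    have dM: "(1 + \<delta>) * M \<le> z"
    proof -
      have "\<delta> * M \<le> \<delta> * (M + 1)" using d by simp
      also have "\<delta> * (M + 1) = z - M" using M0 by (simp add: \<delta>_def)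
      finally show ?thesis by (simp add: algebra_simps)
    qed
    have evU: "\<forall>\<^sub>F n in sequentially. \<forall>f. (\<forall>\<gamma>. f \<gamma> \<noteq> 0 \<longrightarrow> \<gamma> \<in> B) \<longrightarrow> Nn n f \<le> Ni f + \<epsilon> * (\<Sum>b\<in>B. cmod (f b))"
      by (rule unif_upper[OF e])
    show ?thesis using evU
    proof eventually_elim
      case (elim n)
      have "?Ln n \<le> ereal z"
      proof (rule SUP_least)
        fix g assume g: "g \<in> H n - {0}"
        have lg: "l g > 0" using g l_nonneg[of g] l_zero[of g] by force
        have Nn: "Nn n (ag a g) \<le> Ni (ag a g) + \<epsilon> * (\<Sum>b\<in>B. cmod (ag a g b))"
          using elim agB by blast
        have "\<epsilon> * (\<Sum>b\<in>B. cmod (ag a g b)) \<le> \<epsilon> * (real (card B) * Ni (ag a g))"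
          using sumB_le[OF agB] e by (intro mult_left_mono) simp_all
        also have "\<dots> \<le> \<delta> * Ni (ag a g)"
          using ecB Ni_nonneg[OF agB[of g]] by (simp add: mult.assoc[symmetric] mult_right_mono)
        finally have "Nn n (ag a g) \<le> (1 + \<delta>) * Ni (ag a g)" using Nn by (simp add: algebra_simps)
        then have "Nn n (ag a g) / l g \<le> (1 + \<delta>) * (Ni (ag a g) / l g)"
          using lg by (simp add: divide_right_mono)
        also have "\<dots> \<le> (1 + \<delta>) * M" using ratM[of g] g d by (intro mult_left_mono) auto
        also have "\<dots> \<le> z" by (rule dM)
        finally show "ereal (Nn n (ag a g) / l g) \<le> ereal z" by simp
      qed
      then show ?case using z(2) by (rule order_le_less_trans)
    qed
  qed
qed

lemma main_conv:
  assumes a: "\<And>\<gamma>. a \<gamma> \<noteq> 0 \<Longrightarrow> \<gamma> \<in> B"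
  shows "(\<lambda>n. LipL l (H n) (\<sigma> n) (theta (H n) a)) \<longlonglongrightarrow> LipL l UNIV \<sigma>_inf a"
proof -
  have ev: "\<forall>\<^sub>F n in sequentially. (SUP g\<in>H n - {0}. ereal (Nn n (ag a g) / l g)) = LipL l (H n) (\<sigma> n) (theta (H n) a)"
    using eventually_ge_at_top[of N] by eventually_elim (simp add: LipL_n[where a=a, OF _ a])
  show ?thesis unfolding LipL_inf
    using tendsto_cong[OF ev] conv_main[where a=a, OF a] by simp
qed

end


theorem mainTheorem4:
  fixes l :: "'g::{topological_ab_group_add, t2_space} \<Rightarrow> real"
    and H :: "nat \<Rightarrow> 'g set"
    and lam :: "nat \<Rightarrow> 'g measure" and lam_inf :: "'g measure"
    and \<sigma> :: "nat \<Rightarrow> ('g \<Rightarrow> complex) \<Rightarrow> ('g \<Rightarrow> complex) \<Rightarrow> complex"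
    and \<sigma>_inf :: "('g \<Rightarrow> complex) \<Rightarrow> ('g \<Rightarrow> complex) \<Rightarrow> complex"
    and \<epsilon> :: real and \<phi> :: "'g \<Rightarrow> real"
    and c :: "('g \<Rightarrow> complex) \<Rightarrow> complex" and B :: "('g \<Rightarrow> complex) set"
    and N :: nat
  assumes G_compact: "compact (UNIV :: 'g set)"
    and l_len: "length_fun l" and l_cont: "continuous_on UNIV l"
    and H_sub: "\<forall>n. closed (H n) \<and> is_subgroup (H n)"
    and H_conv: "(\<lambda>n. hausdorff_dist (\<lambda>g g'. l (- g + g')) (H n) UNIV) \<longlonglongrightarrow> 0"
    and haar: "\<forall>n. haar_prob (H n) (lam n)" and haar_inf: "haar_prob UNIV lam_inf"
    and sig: "\<forall>n. skew_bichar (dual_sub (H n)) (dmul (H n)) (\<sigma> n)"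
    and sig_inf: "skew_bichar (dual_sub UNIV) (dmul UNIV) \<sigma>_inf"
    and sig_conv: "\<forall>\<gamma>\<in>characters. \<forall>\<psi>\<in>characters.
                     (\<lambda>n. \<sigma> n (q (H n) \<gamma>) (q (H n) \<psi>)) \<longlonglongrightarrow> \<sigma>_inf \<gamma> \<psi>"
    and eps: "\<epsilon> > 0"
    and B_fin: "finite B" and B_chars: "B \<subseteq> characters" and c_nz: "\<forall>\<gamma>\<in>B. c \<gamma> \<noteq> 0"
    and phi_comb: "\<forall>x. complex_of_real (\<phi> x) = (\<Sum>\<gamma>\<in>B. c \<gamma> * \<gamma> x)"
    and phi_nonneg: "\<forall>x. \<phi> x \<ge> 0"
    and phi_int: "integral\<^sup>L lam_inf \<phi> = 1"
    and phi_l: "integral\<^sup>L lam_inf (\<lambda>x. \<phi> x * l x) \<le> \<epsilon> / (3 * (1 + \<epsilon>))"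
    and N_eps: "\<forall>n\<ge>N. inj_on (q (H n)) B \<and> integral\<^sup>L (lam n) \<phi> \<ge> 1 / (1 + \<epsilon>)"
  shows "\<forall>a\<in>V_eps B \<sigma>_inf.
           (\<lambda>n. LipL l (H n) (\<sigma> n) (theta (H n) a)) \<longlonglongrightarrow> LipL l UNIV \<sigma>_inf a"
proof
  fix a assume aV: "a \<in> V_eps B \<sigma>_inf"
  have a: "\<And>\<gamma>. a \<gamma> \<noteq> 0 \<Longrightarrow> \<gamma> \<in> B" using aV by (auto simp: V_eps_def)
  have Ninj: "\<forall>n\<ge>N. inj_on (q (H n)) B" using N_eps by blast
  have M0: "mainset l H" by (rule mainset.intro[OF G_compact l_len l_cont H_sub H_conv])
  have M1: "mainset2_axioms H \<sigma> \<sigma>_inf B N"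
    by (rule mainset2_axioms.intro[OF sig sig_inf sig_conv B_fin B_chars Ninj])
  interpret M: mainset2 l H \<sigma> \<sigma>_inf B N by (rule mainset2.intro[OF M0 M1])
  show "(\<lambda>n. LipL l (H n) (\<sigma> n) (theta (H n) a)) \<longlonglongrightarrow> LipL l UNIV \<sigma>_inf a"
    by (rule M.main_conv[where a=a, OF a])
qed

end
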